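(* Let $G$ be the full group of a Bratteli diagram whose path space $X$ is a Cantor set and on which $G$ acts minimally. Let $s\in G$ and $A=supp(s)$. Then for any $r\in\mathbb N$ and any $\varepsilon>0$ there exist elements $s_1,\dots,s_{2^r}\in G$ such that: (1) each $s_i$ is conjugate in $G$ to $s$; (2) $supp(s_i)=A$ for all $i$, and $\mu\bigl(A\setminus supp(s_is_j^{-1})\bigr)<\varepsilon$ for all $1\le i\ne j\le 2^r$ and all $\mu\in\mathcal M(G)$; (3) for all $i\ne j$, the element $s_is_j^{-1}$ consists of even cycles.
   Context: Bratteli diagram: vertex levels $V_0=\{v_0\},V_1,\dots$, finite edge sets $E_n$ from $V_{n-1}$ to $V_n$. Path space $X$: infinite paths from $v_0$ with the cylinder topology. Full group $G=\bigcup_nG_n$, where $G_n$ consists of the homeomorphisms of $X$ that replace the first $n$ edges of a path by another path from $v_0$ to the same vertex of $V_n$ (depending only on these $n$ edges) and keep the remaining edges. $supp(g)=\{x:g(x)\ne x\}$. $\mathcal M(G)$: $G$-invariant Borel probability measures on $X$. An element $g$ consists of even cycles if the $g$-period of each point is $1$ or even. *)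

theory Defs
  imports "HOL-Analysis.Analysis" "HOL-Probability.Probability"
begin

definition bratteli :: "(nat \<Rightarrow> 'v set) \<Rightarrow> (nat \<Rightarrow> 'e set) \<Rightarrow> ('e \<Rightarrow> 'v) \<Rightarrow> ('e \<Rightarrow> 'v) \<Rightarrow> 'v \<Rightarrow> bool"
  where "bratteli V E src rng v0 \<longleftrightarrow>
     V 0 = {v0} \<and> (\<forall>n. finite (V n)) \<and> (\<forall>n. finite (E n)) \<and>
     (\<forall>n. \<forall>e \<in> E (Suc n). src e \<in> V n \<and> rng e \<in> V (Suc n))"

definition path_space :: "(nat \<Rightarrow> 'e set) \<Rightarrow> ('e \<Rightarrow> 'v) \<Rightarrow> ('e \<Rightarrow> 'v) \<Rightarrow> 'v \<Rightarrow> (nat \<Rightarrow> 'e) set"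
  where "path_space E src rng v0 =
     {x. (\<forall>k. x k \<in> E (Suc k)) \<and> src (x 0) = v0 \<and> (\<forall>k. rng (x k) = src (x (Suc k)))}"

definition cyl_top :: "(nat \<Rightarrow> 'e) set \<Rightarrow> (nat \<Rightarrow> 'e) topology"
  where "cyl_top X = subtopology (product_topology (\<lambda>_. discrete_topology UNIV) UNIV) X"

definition cantor_ternary :: "real set"
  where "cantor_ternary = {t. \<exists>d::nat \<Rightarrow> nat. (\<forall>n. d n \<in> {0,2}) \<and>
                                  (\<lambda>n. real (d n) / 3 ^ Suc n) sums t}"

definition is_cantor_space :: "'a topology \<Rightarrow> bool"
  where "is_cantor_space T \<longleftrightarrow> T homeomorphic_space subtopology euclideanreal cantor_ternary"

text \<open>G_n: homeomorphisms of X changing only the first n edges, depending only on them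
  (the new prefix automatically ends at the same vertex since the image lies in X).
  Elements are represented as maps on the whole function type that are the identity
  off X.\<close>
definition full_group_n :: "(nat \<Rightarrow> 'e) set \<Rightarrow> nat \<Rightarrow> ((nat \<Rightarrow> 'e) \<Rightarrow> (nat \<Rightarrow> 'e)) set"
  where "full_group_n X n = {g.
     homeomorphic_map (cyl_top X) (cyl_top X) g \<and>
     (\<forall>x. x \<notin> X \<longrightarrow> g x = x) \<and>
     (\<forall>x\<in>X. \<forall>k\<ge>n. g x k = x k) \<and>
     (\<forall>x\<in>X. \<forall>y\<in>X. (\<forall>k<n. x k = y k) \<longrightarrow> (\<forall>k<n. g x k = g y k))}"

definition full_group :: "(nat \<Rightarrow> 'e) set \<Rightarrow> ((nat \<Rightarrow> 'e) \<Rightarrow> (nat \<Rightarrow> 'e)) set"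
  where "full_group X = (\<Union>n. full_group_n X n)"

definition supp :: "(nat \<Rightarrow> 'e) set \<Rightarrow> ((nat \<Rightarrow> 'e) \<Rightarrow> (nat \<Rightarrow> 'e)) \<Rightarrow> (nat \<Rightarrow> 'e) set"
  where "supp X g = {x \<in> X. g x \<noteq> x}"

definition minimal_action :: "(nat \<Rightarrow> 'e) set \<Rightarrow> bool"
  where "minimal_action X \<longleftrightarrow>
     (\<forall>x\<in>X. (cyl_top X) closure_of {g x | g. g \<in> full_group X} = X)"

definition inv_measures :: "(nat \<Rightarrow> 'e) set \<Rightarrow> (nat \<Rightarrow> 'e) measure set"
  where "inv_measures X = {\<mu>. prob_space \<mu> \<and> space \<mu> = X \<and>
     sets \<mu> = sigma_sets X {U. openin (cyl_top X) U} \<and>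
     (\<forall>g \<in> full_group X. \<forall>B \<in> sets \<mu>. emeasure \<mu> (g -` B \<inter> X) = emeasure \<mu> B)}"

definition conj_in :: "(nat \<Rightarrow> 'e) set \<Rightarrow> ((nat \<Rightarrow> 'e) \<Rightarrow> (nat \<Rightarrow> 'e)) \<Rightarrow> ((nat \<Rightarrow> 'e) \<Rightarrow> (nat \<Rightarrow> 'e)) \<Rightarrow> bool"
  where "conj_in X a b \<longleftrightarrow> (\<exists>h \<in> full_group X. a = h \<circ> b \<circ> inv h)"

definition period :: "('a \<Rightarrow> 'a) \<Rightarrow> 'a \<Rightarrow> nat"
  where "period g x = (LEAST p. 0 < p \<and> (g ^^ p) x = x)"

definition even_cycles :: "(nat \<Rightarrow> 'e) set \<Rightarrow> ((nat \<Rightarrow> 'e) \<Rightarrow> (nat \<Rightarrow> 'e)) \<Rightarrow> bool"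
  where "even_cycles X g \<longleftrightarrow>
     (\<forall>x\<in>X. (\<exists>p>0. (g ^^ p) x = x) \<and> (period g x = 1 \<or> even (period g x)))"

end

theory Submission
  imports Defs
begin

unbundle bit_operations_syntax



lemma xor_lt: "(x::nat) < 2^j \<Longrightarrow> y < 2^j \<Longrightarrow> x XOR y < 2^j"
  by (metis take_bit_nat_eq_self_iff take_bit_xor)
lemma xor_eq_self: "(x::nat) XOR d = x \<longleftrightarrow> d = 0"
  by (metis xor.assoc xor.left_neutral xor.right_neutral xor_self_eq)
lemma xor_eq_0: "(x::nat) XOR d = 0 \<longleftrightarrow> x = d"
  by (metis xor.assoc xor.left_neutral xor_self_eq xor.commute)

lemma enum_first:
  assumes "finite Z" "B \<subseteq> Z"
  shows "\<exists>e. bij_betw e {0..<card Z} Z \<and> e ` {0..<card B} = B"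
proof -
  have fB: "finite B" using assms finite_subset by blast
  obtain e1 where e1: "bij_betw e1 {0..<card B} B" using ex_bij_betw_nat_finite[OF fB] by blast
  obtain e2 where e2: "bij_betw e2 {0..<card (Z-B)} (Z-B)"
    using ex_bij_betw_nat_finite[of "Z-B"] assms by blast
  define cB where "cB = card B"
  define cZ where "cZ = card Z"
  have cle: "cB \<le> cZ" unfolding cB_def cZ_def using assms card_mono by blast
  have cd: "card (Z-B) = cZ - cB" unfolding cB_def cZ_def using assms fB card_Diff_subset by blast
  define e where "e i = (if i < cB then e1 i else e2 (i - cB))" for i
  have im1: "e ` {0..<cB} = B" using e1 unfolding bij_betw_def e_def cB_def by auto
  have "(\<lambda>i. i - cB) ` {cB..<cZ} = {0..<cZ - cB}"
  proof
    show "(\<lambda>i. i - cB) ` {cB..<cZ} \<subseteq> {0..<cZ - cB}" by auto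
    show "{0..<cZ - cB} \<subseteq> (\<lambda>i. i - cB) ` {cB..<cZ}"
    proof
      fix j assume "j \<in> {0..<cZ - cB}"
      then have "j + cB \<in> {cB..<cZ}" "j = (j + cB) - cB" by auto
      then show "j \<in> (\<lambda>i. i - cB) ` {cB..<cZ}" by blast
    qed
  qed
  then have "e ` {cB..<cZ} = e2 ` {0..<cZ - cB}"
  proof -
    have "e ` {cB..<cZ} = (\<lambda>i. e2 (i - cB)) ` {cB..<cZ}" unfolding e_def by (rule image_cong) auto
    also have "\<dots> = e2 ` ((\<lambda>i. i - cB) ` {cB..<cZ})" by (simp add: image_image)
    finally show ?thesis using \<open>(\<lambda>i. i - cB) ` {cB..<cZ} = {0..<cZ - cB}\<close> by simp
  qed
  also have "\<dots> = Z - B" using e2 cd unfolding bij_betw_def by auto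
  finally have im2: "e ` {cB..<cZ} = Z - B" .
  have "{0..<cZ} = {0..<cB} \<union> {cB..<cZ}" using cle by auto
  then have im: "e ` {0..<cZ} = Z" using im1 im2 assms by auto
  have "inj_on e {0..<cZ}"
    by (rule eq_card_imp_inj_on) (use im cZ_def in auto)
  then show ?thesis using im im1 unfolding bij_betw_def cZ_def cB_def by blast
qed

lemma divmod_aux:
  fixes i b K N :: nat
  assumes "i < N div K * K" "b < K"
  shows "i div K * K + b < N div K * K" "(i div K * K + b) div K = i div K" "(i div K * K + b) mod K = b"
proof -
  have K: "K > 0" using assms by auto
  have "i div K < N div K" using assms K by (metis div_less_iff_less_mult)
  then have "i div K + 1 \<le> N div K" by simp
  then have "(i div K + 1) * K \<le> N div K * K" by (meson mult_le_mono1)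
  then show "i div K * K + b < N div K * K" using assms by (simp add: algebra_simps)
  show "(i div K * K + b) div K = i div K" using assms K by simp
  show "(i div K * K + b) mod K = b" using assms K by simp
qed

lemma act1:
  assumes "finite Z" "K = (2::nat)^j"
  shows "\<exists>act Bad. (\<forall>d<K. \<forall>c\<in>Z. act d c \<in> Z) \<and> (\<forall>c\<in>Z. act 0 c = c) \<and>
     (\<forall>d<K. \<forall>d'<K. \<forall>c\<in>Z. act d (act d' c) = act (d XOR d') c) \<and>
     (\<forall>c\<in>Z-Bad. \<forall>d<K. act d c = c \<longrightarrow> d = 0) \<and> Bad \<subseteq> Z \<and> card Bad < K"
proof -
  define N where "N = card Z"
  obtain e where e: "bij_betw e {0..<N} Z" using ex_bij_betw_nat_finite[OF assms(1)] N_def by blast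
  define \<iota> where "\<iota> = the_inv_into {0..<N} e"
  have K0: "K > 0" using assms by simp
  define L where "L = N div K * K"
  have LN: "L \<le> N" unfolding L_def by (simp add: div_times_less_eq_dividend)
  have iota: "\<And>c. c \<in> Z \<Longrightarrow> \<iota> c < N \<and> e (\<iota> c) = c"
    using e unfolding \<iota>_def bij_betw_def
    by (metis atLeastLessThan_iff f_the_inv_into_f the_inv_into_into zero_le subset_refl)
  have iota2: "\<And>i. i < N \<Longrightarrow> \<iota> (e i) = i"
    using e unfolding \<iota>_def bij_betw_def by (simp add: the_inv_into_f_f)
  define act where "act d c = (if c \<in> Z \<and> \<iota> c < L then e (\<iota> c div K * K + (\<iota> c mod K XOR d)) else c)" for d c
  define Bad where "Bad = e ` {L..<N}"
  have xl: "\<And>i d. d < K \<Longrightarrow> i mod K XOR d < K"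
    using assms(2) K0 xor_lt by (metis mod_less_divisor)
  have P1: "\<forall>d<K. \<forall>c\<in>Z. act d c \<in> Z"
  proof (intro allI impI ballI)
    fix d c assume "d < K" "c \<in> Z"
    show "act d c \<in> Z"
    proof (cases "\<iota> c < L")
      case True
      then have "\<iota> c div K * K + (\<iota> c mod K XOR d) < L" using divmod_aux(1) xl \<open>d<K\<close> L_def by blast
      then show ?thesis using e LN \<open>c\<in>Z\<close> True unfolding act_def bij_betw_def by auto
    qed (simp add: act_def \<open>c\<in>Z\<close>)
  qed
  have P2: "\<forall>c\<in>Z. act 0 c = c"
    using iota by (simp add: act_def)
  have P3: "\<forall>d<K. \<forall>d'<K. \<forall>c\<in>Z. act d (act d' c) = act (d XOR d') c"
  proof (intro allI impI ballI)
    fix d d' c assume d: "d < K" "d' < K" "c \<in> Z"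
    show "act d (act d' c) = act (d XOR d') c"
    proof (cases "\<iota> c < L")
      case True
      define i where "i = \<iota> c"
      define j where "j = i div K * K + (i mod K XOR d')"
      have jL: "j < L" "j div K = i div K" "j mod K = i mod K XOR d'"
        using divmod_aux[of i N K "i mod K XOR d'"] True xl d L_def unfolding i_def j_def by auto
      have ej: "e j \<in> Z" "\<iota> (e j) = j" using jL LN e iota2 unfolding bij_betw_def by auto
      have "act d' c = e j" unfolding act_def j_def i_def using True d by simp
      then have "act d (act d' c) = e (i div K * K + ((i mod K XOR d') XOR d))"
        using ej jL unfolding act_def by simp
      also have "\<dots> = act (d XOR d') c"
        unfolding act_def i_def using True d by (simp add: xor.assoc xor.commute xor.left_commute)
      finally show ?thesis .
    qed (simp add: act_def)
  qed
  have P4: "\<forall>c\<in>Z-Bad. \<forall>d<K. act d c = c \<longrightarrow> d = 0"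
  proof (intro ballI allI impI)
    fix c d assume c: "c \<in> Z - Bad" and d: "d < K" and ac: "act d c = c"
    define i where "i = \<iota> c"
    have iN: "i < N" "e i = c" using iota c i_def by auto
    have iL: "i < L"
    proof (rule ccontr)
      assume "\<not> i < L"
      then have "c \<in> Bad" using iN unfolding Bad_def by auto
      then show False using c by auto
    qed
    define j where "j = i div K * K + (i mod K XOR d)"
    have jL: "j < L" "j mod K = i mod K XOR d"
      using divmod_aux[of i N K "i mod K XOR d"] iL xl d L_def unfolding j_def by auto
    have "e j = e i" using ac iN iL c unfolding act_def j_def i_def by auto
    then have "j = i" using e jL LN iN unfolding bij_betw_def inj_on_def by auto
    then have "i mod K XOR d = i mod K" using jL by simp
    then show "d = 0" using xor_eq_self by blast
  qed
  have P5: "Bad \<subseteq> Z" using e LN unfolding Bad_def bij_betw_def by auto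
  have "card Bad = card {L..<N}" unfolding Bad_def
    by (rule card_image, rule inj_on_subset[of e "{0..<N}"]) (use e in \<open>auto simp: bij_betw_def\<close>)
  also have "\<dots> = N - L" by simp
  also have "\<dots> = N mod K" unfolding L_def by (simp add: minus_div_mult_eq_mod)
  also have "\<dots> < K" using K0 by simp
  finally have P6: "card Bad < K" .
  show ?thesis using P1 P2 P3 P4 P5 P6 by blast
qed


lemma tau_aux: fixes x b c i :: nat shows "x + b \<le> c \<Longrightarrow> x = 0 \<or> b \<le> x \<Longrightarrow> i < c \<Longrightarrow>
       (if i < b then i + x else if x \<le> i \<and> i < x+b then i - x else i) < c \<and>
       (let j = (if i < b then i + x else if x \<le> i \<and> i < x+b then i - x else i) in
        (if j < b then j + x else if x \<le> j \<and> j < x+b then j - x else j)) = i"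
  by (cases "i < b"; cases "x \<le> i \<and> i < x + b"; simp add: Let_def; linarith)

lemma disj1:
  assumes "finite Z" "B \<subseteq> Z" "N * card B \<le> card Z"
  shows "\<exists>G. \<forall>k<N. (\<forall>z\<in>Z. G k z \<in> Z \<and> G k (G k z) = z) \<and>
            (\<forall>k'<N. k \<noteq> k' \<longrightarrow> G k ` B \<inter> G k' ` B = {})"
proof -
  define b where "b = card B"
  define c where "c = card Z"
  obtain e where e: "bij_betw e {0..<c} Z" "e ` {0..<b} = B"
    using enum_first[OF assms(1,2)] b_def c_def by blast
  define \<iota> where "\<iota> = the_inv_into {0..<c} e"
  have iota: "\<And>z. z \<in> Z \<Longrightarrow> \<iota> z < c \<and> e (\<iota> z) = z"
    using e(1) unfolding \<iota>_def bij_betw_def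
    by (metis atLeastLessThan_iff f_the_inv_into_f the_inv_into_into zero_le subset_refl)
  have iota2: "\<And>i. i < c \<Longrightarrow> \<iota> (e i) = i"
    using e(1) unfolding \<iota>_def bij_betw_def by (simp add: the_inv_into_f_f)
  have bc: "b \<le> c" unfolding b_def c_def using assms card_mono by blast
  define \<tau> where "\<tau> k i = (if i < b then i + k*b else if k*b \<le> i \<and> i < k*b+b then i - k*b else i)" for k i
  define G where "G k z = e (\<tau> k (\<iota> z))" for k z
  have kb: "\<And>k. k < N \<Longrightarrow> k*b + b \<le> c"
  proof -
    fix k assume "k < N"
    then have "(k+1)*b \<le> N*b" by (intro mult_le_mono1) simp
    then show "k*b + b \<le> c" using assms(3) b_def c_def by simp
  qed
  have tc: "\<And>k i. k < N \<Longrightarrow> i < c \<Longrightarrow> \<tau> k i < c \<and> \<tau> k (\<tau> k i) = i"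
  proof -
    fix k i assume k: "k < N" and i: "i < c"
    have h: "k*b + b \<le> c" using kb k .
    have x: "k*b = 0 \<or> b \<le> k*b" by (cases k) auto
    show "\<tau> k i < c \<and> \<tau> k (\<tau> k i) = i"
      using tau_aux[OF h x i] unfolding \<tau>_def Let_def by simp
  qed
  have GB: "\<And>k. k < N \<Longrightarrow> G k ` B = e ` {k*b..<k*b+b}"
  proof -
    fix k assume k: "k < N"
    have "G k ` B = (\<lambda>i. G k (e i)) ` {0..<b}" using e(2) by auto
    also have "\<dots> = (\<lambda>i. e (i + k*b)) ` {0..<b}"
      by (rule image_cong) (use iota2 bc in \<open>auto simp: G_def \<tau>_def\<close>)
    also have "\<dots> = e ` ((\<lambda>i. i + k*b) ` {0..<b})" by (rule image_image[symmetric])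
    also have "(\<lambda>i. i + k*b) ` {0..<b} = {k*b..<k*b+b}"
      by (simp add: add.commute)
    finally show "G k ` B = e ` {k*b..<k*b+b}" .
  qed
  have "\<forall>k<N. (\<forall>z\<in>Z. G k z \<in> Z \<and> G k (G k z) = z) \<and>
            (\<forall>k'<N. k \<noteq> k' \<longrightarrow> G k ` B \<inter> G k' ` B = {})"
  proof (intro allI impI conjI ballI)
    fix k z assume k: "k < N" and z: "z \<in> Z"
    have t: "\<tau> k (\<iota> z) < c" "\<tau> k (\<tau> k (\<iota> z)) = \<iota> z" using tc k iota z by auto
    show "G k z \<in> Z" unfolding G_def using e(1) t unfolding bij_betw_def by auto
    show "G k (G k z) = z" unfolding G_def using iota2 t iota z by simp
  next
    fix k k' assume k: "k < N" "k' < N" "k \<noteq> k'"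
    have d: "{k*b..<k*b+b} \<inter> {k'*b..<k'*b+b} = {}"
    proof (cases "k < k'")
      case True
      then have "(k+1)*b \<le> k'*b" by (intro mult_le_mono1) simp
      then show ?thesis by auto
    next
      case False
      then have "(k'+1)*b \<le> k*b" using k by (intro mult_le_mono1) simp
      then show ?thesis by auto
    qed
    have sub: "{k*b..<k*b+b} \<subseteq> {0..<c}" "{k'*b..<k'*b+b} \<subseteq> {0..<c}" using kb k by auto
    have inj: "inj_on e {0..<c}" using e(1) bij_betw_def by blast
    show "G k ` B \<inter> G k' ` B = {}"
      unfolding GB[OF k(1)] GB[OF k(2)]
      by (metis d image_empty inj_on_image_Int[OF inj sub])
  qed
  then show ?thesis by blast
qed

lemma col3:
  assumes "finite T" "inj_on \<sigma> T"
  shows "\<exists>col::'a\<Rightarrow>nat. \<forall>p\<in>T. col p < 3 \<and> (\<sigma> p \<in> T \<and> \<sigma> p \<noteq> p \<longrightarrow> col (\<sigma> p) \<noteq> col p)"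
  using assms
proof (induction T rule: finite_induct)
  case empty then show ?case by auto
next
  case (insert t T)
  have injT: "inj_on \<sigma> T" using insert.prems by (rule inj_on_subset) auto
  obtain col :: "_ \<Rightarrow> nat" where col: "\<forall>p\<in>T. col p < 3 \<and> (\<sigma> p \<in> T \<and> \<sigma> p \<noteq> p \<longrightarrow> col (\<sigma> p) \<noteq> col p)"
    using insert.IH[OF injT] by blast
  define Pre where "Pre = {p\<in>T. \<sigma> p = t}"
  have fPre: "finite Pre" using insert.hyps(1) Pre_def by simp
  have cPre: "card Pre \<le> 1"
  proof -
    have "\<forall>p\<in>Pre. \<forall>q\<in>Pre. p = q"
    proof (intro ballI)
      fix p q assume "p \<in> Pre" "q \<in> Pre"
      then have "p \<in> insert t T" "q \<in> insert t T" "\<sigma> p = \<sigma> q" by (auto simp: Pre_def)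
      then show "p = q" using insert.prems by (simp add: inj_on_eq_iff)
    qed
    then show ?thesis using card_le_Suc0_iff_eq[OF fPre] by simp
  qed
  define Fb where "Fb = col ` (insert (\<sigma> t) Pre)"
  have "card Fb \<le> card (insert (\<sigma> t) Pre)" unfolding Fb_def by (rule card_image_le) (simp add: fPre)
  also have "\<dots> \<le> Suc (card Pre)" by (simp add: card_insert_le_m1 fPre card_insert_if)
  finally have cF: "card Fb \<le> 2" using cPre by simp
  have fF: "finite Fb" unfolding Fb_def using fPre by simp
  have "\<exists>c\<in>{0::nat,1,2}. c \<notin> Fb"
  proof (rule ccontr)
    assume "\<not> ?thesis"
    then have "{0::nat,1,2} \<subseteq> Fb" by auto
    then have "card {0::nat,1,2} \<le> card Fb" using fF card_mono by blast
    then show False using cF by simp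
  qed
  then obtain c where c0: "c \<in> {0::nat,1,2}" "c \<notin> Fb" by blast
  then have c: "c < 3" "c \<notin> Fb" by auto
  define col' where "col' = col(t := c)"
  have "\<forall>p\<in>insert t T. col' p < 3 \<and> (\<sigma> p \<in> insert t T \<and> \<sigma> p \<noteq> p \<longrightarrow> col' (\<sigma> p) \<noteq> col' p)"
  proof (intro ballI conjI impI)
    fix p assume p: "p \<in> insert t T"
    show "col' p < 3" using p col c unfolding col'_def by auto
    assume sp: "\<sigma> p \<in> insert t T \<and> \<sigma> p \<noteq> p"
    show "col' (\<sigma> p) \<noteq> col' p"
    proof (cases "p = t")
      case True
      then have "\<sigma> p \<in> T" using sp by auto
      then have "col' (\<sigma> p) = col (\<sigma> t)" using insert.hyps(2) True unfolding col'_def by auto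
      moreover have "col (\<sigma> t) \<in> Fb" unfolding Fb_def by simp
      ultimately show ?thesis using c True unfolding col'_def by auto
    next
      case False
      then have pT: "p \<in> T" using p by auto
      show ?thesis
      proof (cases "\<sigma> p = t")
        case True
        then have "p \<in> Pre" using pT Pre_def by simp
        then have "col p \<in> Fb" unfolding Fb_def by simp
        then show ?thesis using True c False unfolding col'_def by auto
      next
        case False2: False
        then have "\<sigma> p \<in> T" using sp by auto
        then show ?thesis using col pT sp False False2 unfolding col'_def by auto
      qed
    qed
  qed
  then show ?case by blast
qed



lemma act_classes:
  assumes "finite Z" "K = (2::nat)^j"
  shows "\<exists>act Bad. (\<forall>d<K. \<forall>c\<in>Z. act d c \<in> Z \<and> \<kappa> (act d c) = \<kappa> c) \<and> (\<forall>c\<in>Z. act 0 c = c) \<and>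
     (\<forall>d<K. \<forall>d'<K. \<forall>c\<in>Z. act d (act d' c) = act (d XOR d') c) \<and>
     (\<forall>c\<in>Z-Bad. \<forall>d<K. act d c = c \<longrightarrow> d = 0) \<and> Bad \<subseteq> Z \<and> (\<forall>w. card {c\<in>Bad. \<kappa> c = w} < K)"
proof -
  define Q where "Q w A Bd \<longleftrightarrow> (\<forall>d<K. \<forall>c\<in>{c\<in>Z. \<kappa> c = w}. A d c \<in> {c\<in>Z. \<kappa> c = w}) \<and> (\<forall>c\<in>{c\<in>Z. \<kappa> c = w}. A 0 c = c) \<and>
     (\<forall>d<K. \<forall>d'<K. \<forall>c\<in>{c\<in>Z. \<kappa> c = w}. A d (A d' c) = A (d XOR d') c) \<and>
     (\<forall>c\<in>{c\<in>Z. \<kappa> c = w}-Bd. \<forall>d<K. A d c = c \<longrightarrow> d = 0) \<and> Bd \<subseteq> {c\<in>Z. \<kappa> c = w} \<and> card Bd < K" for w A Bd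
  have "\<forall>w. \<exists>A Bd. Q w A Bd" unfolding Q_def
    by (intro allI act1) (use assms in auto)
  then have "\<forall>w. \<exists>p. Q w (fst p) (snd p)" by simp
  from choice[OF this] obtain f where f: "\<forall>w. Q w (fst (f w)) (snd (f w))" by blast
  define A where "A w = fst (f w)" for w
  define Bd where "Bd w = snd (f w)" for w
  have Qw: "Q w (A w) (Bd w)" for w using f by (simp add: A_def Bd_def)
  note q = Qw[unfolded Q_def]
  have AB1: "\<And>w d c. d < K \<Longrightarrow> c \<in> Z \<Longrightarrow> \<kappa> c = w \<Longrightarrow> A w d c \<in> Z \<and> \<kappa> (A w d c) = w"
  proof -
    fix w d c assume h: "d < K" "c \<in> Z" "\<kappa> c = w"
    have "\<forall>d<K. \<forall>c\<in>{c\<in>Z. \<kappa> c = w}. A w d c \<in> {c\<in>Z. \<kappa> c = w}" using q[of w] by (rule conjunct1)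
    then show "A w d c \<in> Z \<and> \<kappa> (A w d c) = w" using h by simp
  qed
  have AB2: "\<And>w c. c \<in> Z \<Longrightarrow> \<kappa> c = w \<Longrightarrow> A w 0 c = c"
  proof -
    fix w c assume h: "c \<in> Z" "\<kappa> c = w"
    have "\<forall>c\<in>{c\<in>Z. \<kappa> c = w}. A w 0 c = c" using q[of w] by (elim conjE)
    then show "A w 0 c = c" using h by simp
  qed
  have AB3: "\<And>w d d' c. d < K \<Longrightarrow> d' < K \<Longrightarrow> c \<in> Z \<Longrightarrow> \<kappa> c = w \<Longrightarrow> A w d (A w d' c) = A w (d XOR d') c"
  proof -
    fix w d d' c assume h: "d < K" "d' < K" "c \<in> Z" "\<kappa> c = w"
    have "\<forall>d<K. \<forall>d'<K. \<forall>c\<in>{c\<in>Z. \<kappa> c = w}. A w d (A w d' c) = A w (d XOR d') c" using q[of w] by (elim conjE)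
    then show "A w d (A w d' c) = A w (d XOR d') c" using h by simp
  qed
  have AB4: "\<And>w d c. c \<in> Z \<Longrightarrow> \<kappa> c = w \<Longrightarrow> c \<notin> Bd w \<Longrightarrow> d < K \<Longrightarrow> A w d c = c \<Longrightarrow> d = 0"
  proof -
    fix w d c assume h: "c \<in> Z" "\<kappa> c = w" "c \<notin> Bd w" "d < K" "A w d c = c"
    have "\<forall>c\<in>{c\<in>Z. \<kappa> c = w}-Bd w. \<forall>d<K. A w d c = c \<longrightarrow> d = 0" using q[of w] by (elim conjE)
    then show "d = 0" using h by simp
  qed
  have AB5: "\<And>w. Bd w \<subseteq> {c\<in>Z. \<kappa> c = w}" "\<And>w. card (Bd w) < K"
  proof -
    fix w show "Bd w \<subseteq> {c\<in>Z. \<kappa> c = w}" using q[of w] by (elim conjE)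
  next
    fix w show "card (Bd w) < K" using q[of w] by (elim conjE)
  qed
  define act where "act d c = A (\<kappa> c) d c" for d c
  define Bad where "Bad = {c. c \<in> Bd (\<kappa> c)}"
  have P1: "\<forall>d<K. \<forall>c\<in>Z. act d c \<in> Z \<and> \<kappa> (act d c) = \<kappa> c"
    using AB1 unfolding act_def by blast
  have P2: "\<forall>c\<in>Z. act 0 c = c" using AB2 unfolding act_def by blast
  have P3: "\<forall>d<K. \<forall>d'<K. \<forall>c\<in>Z. act d (act d' c) = act (d XOR d') c"
  proof (intro allI impI ballI)
    fix d d' c assume "d < K" "d' < K" "c \<in> Z"
    then have "\<kappa> (act d' c) = \<kappa> c" using P1 by blast
    then show "act d (act d' c) = act (d XOR d') c" unfolding act_def using AB3 \<open>d<K\<close> \<open>d'<K\<close> \<open>c\<in>Z\<close> by simp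
  qed
  have P4: "\<forall>c\<in>Z-Bad. \<forall>d<K. act d c = c \<longrightarrow> d = 0"
    using AB4 unfolding act_def Bad_def by blast
  have P5: "Bad \<subseteq> Z" using AB5 unfolding Bad_def by blast
  have P6: "\<forall>w. card {c\<in>Bad. \<kappa> c = w} < K"
  proof
    fix w
    have "{c\<in>Bad. \<kappa> c = w} \<subseteq> Bd w" unfolding Bad_def by auto
    moreover have "finite (Bd w)" by (rule finite_subset[OF AB5(1)[of w]]) (use assms(1) in simp)
    ultimately have "card {c\<in>Bad. \<kappa> c = w} \<le> card (Bd w)" by (rule card_mono[rotated])
    then show "card {c\<in>Bad. \<kappa> c = w} < K" using AB5(2)[of w] by linarith
  qed
  show ?thesis using P1 P2 P3 P4 P5 P6 by blast
qed

lemma disj_classes: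
  assumes "finite Z" "B \<subseteq> Z" "\<And>w. N * card {b\<in>B. \<kappa> b = w} \<le> card {z\<in>Z. \<kappa> z = w}"
  shows "\<exists>G. \<forall>k<N. (\<forall>z\<in>Z. G k z \<in> Z \<and> \<kappa> (G k z) = \<kappa> z \<and> G k (G k z) = z) \<and>
            (\<forall>k'<N. k \<noteq> k' \<longrightarrow> G k ` B \<inter> G k' ` B = {})"
proof -
  define Q where "Q w H \<longleftrightarrow> (\<forall>k<N. (\<forall>z\<in>{z\<in>Z. \<kappa> z = w}. H k z \<in> {z\<in>Z. \<kappa> z = w} \<and> H k (H k z) = z) \<and>
            (\<forall>k'<N. k \<noteq> k' \<longrightarrow> H k ` {b\<in>B. \<kappa> b = w} \<inter> H k' ` {b\<in>B. \<kappa> b = w} = {}))" for w H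
  have "\<forall>w. \<exists>H. Q w H" unfolding Q_def
    by (intro allI disj1) (use assms in auto)
  from choice[OF this] obtain H where H0: "\<forall>w. Q w (H w)" by blast
  have H: "\<And>w. \<forall>k<N. (\<forall>z\<in>{z\<in>Z. \<kappa> z = w}. H w k z \<in> {z\<in>Z. \<kappa> z = w} \<and> H w k (H w k z) = z) \<and>
            (\<forall>k'<N. k \<noteq> k' \<longrightarrow> H w k ` {b\<in>B. \<kappa> b = w} \<inter> H w k' ` {b\<in>B. \<kappa> b = w} = {})"
  proof -
    fix w show "?thesis w" using H0 unfolding Q_def by (rule spec)
  qed
  define G where "G k z = H (\<kappa> z) k z" for k z
  have G1: "\<forall>k<N. \<forall>z\<in>Z. G k z \<in> Z \<and> \<kappa> (G k z) = \<kappa> z \<and> G k (G k z) = z"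
  proof (intro allI impI ballI)
    fix k z assume k: "k < N" and z: "z \<in> Z"
    have h: "H (\<kappa> z) k z \<in> {y\<in>Z. \<kappa> y = \<kappa> z}" "H (\<kappa> z) k (H (\<kappa> z) k z) = z"
      using H[of "\<kappa> z"] k z by auto
    then show "G k z \<in> Z \<and> \<kappa> (G k z) = \<kappa> z \<and> G k (G k z) = z" unfolding G_def by simp
  qed
  have G2: "\<forall>k<N. \<forall>k'<N. k \<noteq> k' \<longrightarrow> G k ` B \<inter> G k' ` B = {}"
  proof (intro allI impI)
    fix k k' assume k: "k < N" "k' < N" "k \<noteq> k'"
    show "G k ` B \<inter> G k' ` B = {}"
    proof (rule ccontr)
      assume "G k ` B \<inter> G k' ` B \<noteq> {}"
      then obtain b b' where bb: "b \<in> B" "b' \<in> B" "G k b = G k' b'" by auto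
      have bZ: "b \<in> Z" "b' \<in> Z" using bb(1,2) assms(2) by auto
      have "\<kappa> (G k b) = \<kappa> b" using G1 k(1) bZ(1) by blast
      moreover have "\<kappa> (G k' b') = \<kappa> b'" using G1 k(2) bZ(2) by blast
      ultimately have kb: "\<kappa> b = \<kappa> b'" using bb(3) by simp
      have m1: "H (\<kappa> b) k b \<in> H (\<kappa> b) k ` {y\<in>B. \<kappa> y = \<kappa> b}" using bb by auto
      have m2: "H (\<kappa> b) k b = H (\<kappa> b) k' b'" using bb kb unfolding G_def by simp
      have m3: "H (\<kappa> b) k' b' \<in> H (\<kappa> b) k' ` {y\<in>B. \<kappa> y = \<kappa> b}" using bb kb by auto
      have "\<forall>k'<N. k \<noteq> k' \<longrightarrow> H (\<kappa> b) k ` {y\<in>B. \<kappa> y = \<kappa> b} \<inter> H (\<kappa> b) k' ` {y\<in>B. \<kappa> y = \<kappa> b} = {}"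
        using H[of "\<kappa> b"] k(1) by simp
      then have m4: "H (\<kappa> b) k ` {y\<in>B. \<kappa> y = \<kappa> b} \<inter> H (\<kappa> b) k' ` {y\<in>B. \<kappa> y = \<kappa> b} = {}"
        using k(2,3) by simp
      have "H (\<kappa> b) k b \<in> H (\<kappa> b) k ` {y\<in>B. \<kappa> y = \<kappa> b} \<inter> H (\<kappa> b) k' ` {y\<in>B. \<kappa> y = \<kappa> b}"
        by (rule IntI[OF m1]) (subst m2, rule m3)
      then show False unfolding m4 by (rule emptyE)
    qed
  qed
  show ?thesis using G1 G2 by (intro exI[of _ G]) simp
qed



definition pre :: "nat \<Rightarrow> (nat \<Rightarrow> 'e) \<Rightarrow> 'e list" where "pre m x = map x [0..<m]"

lemma length_pre[simp]: "length (pre m x) = m" by (simp add: pre_def)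
lemma nth_pre[simp]: "k < m \<Longrightarrow> pre m x ! k = x k" by (simp add: pre_def)
lemma pre_Suc: "pre (Suc m) x = pre m x @ [x m]" by (simp add: pre_def)
lemma pre_0[simp]: "pre 0 x = []" by (simp add: pre_def)
lemma take_pre: "n \<le> m \<Longrightarrow> take n (pre m x) = pre n x"
  by (simp add: pre_def take_map)
lemma pre_eq_iff: "pre m x = pre m y \<longleftrightarrow> (\<forall>k<m. x k = y k)"
  by (auto simp: pre_def)
lemma last_pre: "m > 0 \<Longrightarrow> last (pre m x) = x (m - 1)"
  by (simp add: pre_def last_map)

definition splice :: "nat \<Rightarrow> (nat \<Rightarrow> 'e) \<Rightarrow> (nat \<Rightarrow> 'e) \<Rightarrow> (nat \<Rightarrow> 'e)"
  where "splice k x z = (\<lambda>i. if i < k then x i else z i)"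

lemma openin_fix:
  fixes m :: nat and f :: "nat \<Rightarrow> 'a"
  shows "openin (product_topology (\<lambda>_. discrete_topology UNIV) UNIV) {x. \<forall>k<m. x k = f k}"
proof (induction m)
  case 0
  have "{x::nat\<Rightarrow>'a. \<forall>k<0. x k = f k} = topspace (product_topology (\<lambda>_. discrete_topology (UNIV::'a set)) UNIV)"
    by (simp add: topspace_product_topology)
  then show ?case by (metis openin_topspace)
next
  case (Suc m)
  have "openin (product_topology (\<lambda>_. discrete_topology (UNIV::'a set)) UNIV) {x \<in> topspace (product_topology (\<lambda>_. discrete_topology UNIV) UNIV). x m \<in> {f m}}"
    by (rule openin_continuous_map_preimage[OF continuous_map_product_projection]) auto
  then have o: "openin (product_topology (\<lambda>_. discrete_topology (UNIV::'a set)) UNIV) {x. x m = f m}"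
    by (simp add: topspace_product_topology)
  have "{x. \<forall>k<Suc m. x k = f k} = {x. \<forall>k<m. x k = f k} \<inter> {x. x m = f m}"
    by (auto simp: less_Suc_eq)
  then show ?case using Suc o by (simp add: openin_Int)
qed

locale BD =
  fixes V :: "nat \<Rightarrow> 'v set" and E :: "nat \<Rightarrow> 'e set" and src rng :: "'e \<Rightarrow> 'v" and v0 :: 'v
  assumes brat: "bratteli V E src rng v0"
begin

abbreviation X where "X \<equiv> path_space E src rng v0"

definition ev :: "'e list \<Rightarrow> 'v" where "ev l = (if l = [] then v0 else rng (last l))"
definition Pref :: "nat \<Rightarrow> 'e list set" where "Pref m = pre m ` X"

lemma X_D: assumes "x \<in> X" shows "x k \<in> E (Suc k)" "src (x 0) = v0" "rng (x k) = src (x (Suc k))"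
  using assms unfolding path_space_def by auto

lemma ev_pre: assumes "x \<in> X" shows "ev (pre m x) = src (x m)"
proof (cases m)
  case 0 then show ?thesis using X_D[OF assms] by (simp add: ev_def)
next
  case (Suc k)
  then have "pre m x \<noteq> []" by (metis length_pre list.size(3) nat.distinct(1))
  then show ?thesis using Suc X_D(3)[OF assms, of k] last_pre[of m x] by (simp add: ev_def)
qed

lemma splice_X:
  assumes "x \<in> X" "z \<in> X" "src (x k) = src (z k)"
  shows "splice k x z \<in> X"
proof -
  have a: "\<forall>i. splice k x z i \<in> E (Suc i)" using X_D(1)[OF assms(1)] X_D(1)[OF assms(2)] by (simp add: splice_def)
  have b: "src (splice k x z 0) = v0" using X_D(2)[OF assms(1)] X_D(2)[OF assms(2)] by (simp add: splice_def)
  have c: "rng (splice k x z i) = src (splice k x z (Suc i))" for i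
  proof -
    consider "Suc i < k" | "Suc i = k" | "i \<ge> k" by linarith
    then show ?thesis
    proof cases
      case 1 then show ?thesis using X_D(3)[OF assms(1)] by (simp add: splice_def)
    next
      case 2 then show ?thesis using X_D(3)[OF assms(1), of i] assms(3) by (simp add: splice_def)
    next
      case 3 then show ?thesis using X_D(3)[OF assms(2), of i] by (simp add: splice_def)
    qed
  qed
  show ?thesis unfolding path_space_def using a b c by blast
qed

lemma pre_splice: "pre k (splice k x z) = pre k x"
  by (simp add: pre_eq_iff splice_def)

lemma finite_Pref: "finite (Pref m)"
proof -
  have fE: "finite (\<Union>k<m. E (Suc k))" using brat unfolding bratteli_def by auto
  have "Pref m \<subseteq> {l. set l \<subseteq> (\<Union>k<m. E (Suc k)) \<and> length l = m}"
    unfolding Pref_def pre_def using X_D(1) by fastforce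
  then show ?thesis using finite_lists_length_eq[OF fE] finite_subset by blast
qed

lemma topspace_cyl: "topspace (cyl_top X) = X"
  unfolding cyl_top_def by (simp add: topspace_product_topology)

lemma openin_cyl: "openin (cyl_top X) {x \<in> X. pre m x \<in> B}"
proof -
  let ?P = "product_topology (\<lambda>_. discrete_topology (UNIV::'e set)) (UNIV::nat set)"
  define T where "T = (\<Union>l\<in>B \<inter> {l. length l = m}. {x::nat\<Rightarrow>'e. \<forall>k<m. x k = l ! k})"
  have "openin ?P T" unfolding T_def by (intro openin_Union) (auto intro: openin_fix)
  moreover have "{x \<in> X. pre m x \<in> B} = T \<inter> X"
  proof (intro equalityI subsetI)
    fix x assume "x \<in> {x \<in> X. pre m x \<in> B}"
    then show "x \<in> T \<inter> X" unfolding T_def by (auto intro!: bexI[of _ "pre m x"])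
  next
    fix x assume "x \<in> T \<inter> X"
    then obtain l where "l \<in> B" "length l = m" "\<forall>k<m. x k = l ! k" "x \<in> X" unfolding T_def by auto
    moreover then have "pre m x = l" by (simp add: list_eq_iff_nth_eq)
    ultimately show "x \<in> {x \<in> X. pre m x \<in> B}" by simp
  qed
  ultimately show ?thesis unfolding cyl_top_def openin_subtopology by blast
qed

definition gmap :: "nat \<Rightarrow> ('e list \<Rightarrow> 'e list) \<Rightarrow> (nat \<Rightarrow> 'e) \<Rightarrow> (nat \<Rightarrow> 'e)"
  where "gmap m F x = (if x \<in> X then (\<lambda>k. if k < m then F (pre m x) ! k else x k) else x)"

definition pmap :: "nat \<Rightarrow> ('e list \<Rightarrow> 'e list) \<Rightarrow> bool"
  where "pmap m F \<longleftrightarrow> (\<forall>l\<in>Pref m. F l \<in> Pref m \<and> ev (F l) = ev l)"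

lemma gmap_X:
  assumes "pmap m F" "x \<in> X"
  shows "gmap m F x \<in> X" "pre m (gmap m F x) = F (pre m x)" "\<And>k. k \<ge> m \<Longrightarrow> gmap m F x k = x k"
proof -
  have "pre m x \<in> Pref m" using assms(2) unfolding Pref_def by blast
  then have h: "F (pre m x) \<in> Pref m" "ev (F (pre m x)) = ev (pre m x)" using assms(1) unfolding pmap_def by auto
  then obtain y where y: "y \<in> X" "F (pre m x) = pre m y" unfolding Pref_def by auto
  have "src (y m) = src (x m)" using h(2) y ev_pre assms(2) by metis
  then have s: "splice m y x \<in> X" using splice_X y(1) assms(2) by blast
  have eq: "gmap m F x = splice m y x"
    unfolding gmap_def splice_def using assms(2) y(2) by (auto simp: fun_eq_iff)
  show "gmap m F x \<in> X" using s eq by simp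
  show "pre m (gmap m F x) = F (pre m x)" using eq y(2) pre_splice by metis
  show "\<And>k. k \<ge> m \<Longrightarrow> gmap m F x k = x k" using eq by (simp add: splice_def)
qed

lemma gmap_out: "x \<notin> X \<Longrightarrow> gmap m F x = x" by (simp add: gmap_def)

lemma gmap_comp:
  assumes "pmap m G"
  shows "gmap m F \<circ> gmap m G = gmap m (F \<circ> G)"
proof
  fix x show "(gmap m F \<circ> gmap m G) x = gmap m (F \<circ> G) x"
  proof (cases "x \<in> X")
    case True
    have g: "gmap m G x \<in> X" "pre m (gmap m G x) = G (pre m x)" "\<And>k. k \<ge> m \<Longrightarrow> gmap m G x k = x k"
      using gmap_X[OF assms True] by auto
    show ?thesis unfolding comp_def gmap_def[of m F] using g True
      by (auto simp: fun_eq_iff gmap_def[of m "\<lambda>x. F (G x)"])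
  qed (simp add: gmap_def)
qed

lemma gmap_id:
  assumes "\<forall>l\<in>Pref m. F l = l"
  shows "gmap m F = id"
proof
  fix x show "gmap m F x = id x"
  proof (cases "x \<in> X")
    case True
    then have "pre m x \<in> Pref m" unfolding Pref_def by blast
    then show ?thesis using assms True by (auto simp: gmap_def fun_eq_iff)
  qed (simp add: gmap_def)
qed

lemma gmap_inv:
  assumes "pmap m F" "pmap m G" "\<forall>l\<in>Pref m. F (G l) = l" "\<forall>l\<in>Pref m. G (F l) = l"
  shows "inv (gmap m F) = gmap m G"
proof (rule inv_unique_comp)
  show "gmap m F \<circ> gmap m G = id" using gmap_comp[OF assms(2)] gmap_id assms(3) by (metis comp_apply)
  show "gmap m G \<circ> gmap m F = id" using gmap_comp[OF assms(1)] gmap_id assms(4) by (metis comp_apply)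
qed

lemma gmap_fix:
  assumes "pmap m F" "x \<in> X"
  shows "gmap m F x = x \<longleftrightarrow> F (pre m x) = pre m x"
proof
  assume "gmap m F x = x"
  then show "F (pre m x) = pre m x" using gmap_X(2)[OF assms] by simp
next
  assume "F (pre m x) = pre m x"
  then show "gmap m F x = x" using assms(2) by (auto simp: gmap_def fun_eq_iff)
qed

lemma cont_gmap:
  assumes "pmap m F"
  shows "continuous_map (cyl_top X) (cyl_top X) (gmap m F)"
proof -
  let ?P = "product_topology (\<lambda>_. discrete_topology (UNIV::'e set)) (UNIV::nat set)"
  have comp: "continuous_map (cyl_top X) (discrete_topology UNIV) (\<lambda>x. gmap m F x k)" for k
  proof -
    define M where "M = max m (Suc k)"
    define B' where "B' U = {l. (if k < m then F (take m l) ! k else l ! k) \<in> U}" for U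
    have "{x \<in> topspace (cyl_top X). gmap m F x k \<in> U} = {x \<in> X. pre M x \<in> B' U}" for U
    proof -
      have "gmap m F x k = (if k < m then F (take m (pre M x)) ! k else pre M x ! k)" if "x \<in> X" for x
        using that unfolding gmap_def M_def by (simp add: take_pre)
      then show ?thesis unfolding B'_def topspace_cyl by auto
    qed
    then show ?thesis unfolding continuous_map_def using openin_cyl by (simp add: topspace_cyl)
  qed
  have "continuous_map (cyl_top X) ?P (gmap m F)"
    using comp by (simp add: continuous_map_componentwise_UNIV)
  moreover have "gmap m F ` topspace (cyl_top X) \<subseteq> X" using gmap_X(1)[OF assms] topspace_cyl by auto
  ultimately show ?thesis unfolding cyl_top_def[of X] by (auto simp: continuous_map_in_subtopology)
qed

definition pperm :: "nat \<Rightarrow> ('e list \<Rightarrow> 'e list) \<Rightarrow> ('e list \<Rightarrow> 'e list) \<Rightarrow> bool"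
  where "pperm m F G \<longleftrightarrow> pmap m F \<and> pmap m G \<and> (\<forall>l\<in>Pref m. F (G l) = l) \<and> (\<forall>l\<in>Pref m. G (F l) = l)"

lemma gmap_in_G:
  assumes "pperm m F G"
  shows "gmap m F \<in> full_group_n X m"
proof -
  have p: "pmap m F" "pmap m G" "\<forall>l\<in>Pref m. F (G l) = l" "\<forall>l\<in>Pref m. G (F l) = l"
    using assms unfolding pperm_def by auto
  have c1: "gmap m G \<circ> gmap m F = id"
    using gmap_comp[OF p(1), of G] gmap_id[of m "G \<circ> F"] p(4) by simp
  have c2: "gmap m F \<circ> gmap m G = id"
    using gmap_comp[OF p(2), of F] gmap_id[of m "F \<circ> G"] p(3) by simp
  have "homeomorphic_maps (cyl_top X) (cyl_top X) (gmap m F) (gmap m G)"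
    unfolding homeomorphic_maps_def topspace_cyl
  proof (intro conjI ballI)
    show "continuous_map (cyl_top X) (cyl_top X) (gmap m F)" by (rule cont_gmap[OF p(1)])
    show "continuous_map (cyl_top X) (cyl_top X) (gmap m G)" by (rule cont_gmap[OF p(2)])
    fix x show "gmap m G (gmap m F x) = x" using fun_cong[OF c1, of x] by simp
  next
    fix x show "gmap m F (gmap m G x) = x" using fun_cong[OF c2, of x] by simp
  qed
  then have h: "homeomorphic_map (cyl_top X) (cyl_top X) (gmap m F)"
    using homeomorphic_map_maps by blast
  have d: "\<forall>x\<in>X. \<forall>y\<in>X. (\<forall>k<m. x k = y k) \<longrightarrow> (\<forall>k<m. gmap m F x k = gmap m F y k)"
    by (auto simp: gmap_def pre_eq_iff[symmetric])
  show ?thesis unfolding full_group_n_def using h d gmap_X(3)[OF p(1)] gmap_out by blast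
qed

lemma gmap_in_full: "pperm m F G \<Longrightarrow> gmap m F \<in> full_group X"
  using gmap_in_G unfolding full_group_def by blast

end



lemma even_cycles_inv:
  assumes "\<forall>x\<in>X. g (g x) = x"
  shows "even_cycles X g"
  unfolding even_cycles_def
proof (intro ballI conjI)
  fix x assume x: "x \<in> X"
  have g2: "(g ^^ 2) x = x" using assms x by (simp add: numeral_2_eq_2)
  then show "\<exists>p>0. (g ^^ p) x = x" by (intro exI[of _ 2]) simp
  show "period g x = 1 \<or> even (period g x)"
  proof (cases "g x = x")
    case True
    then have "period g x = 1" unfolding period_def by (intro Least_equality) auto
    then show ?thesis by simp
  next
    case False
    have "period g x = 2" unfolding period_def
    proof (intro Least_equality)
      show "0 < (2::nat) \<and> (g ^^ 2) x = x" using g2 by simp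
      fix y :: nat assume "0 < y \<and> (g ^^ y) x = x"
      then show "2 \<le> y"
      proof -
        assume h: "0 < y \<and> (g ^^ y) x = x"
        show "2 \<le> y"
        proof (rule ccontr)
          assume "\<not> 2 \<le> y"
          then have "y = 1" using h by simp
          then show False using h False by simp
        qed
      qed
    qed
    then show ?thesis by simp
  qed
qed

lemma cantor_infinite: "infinite cantor_ternary"
proof -
  define t where "t k = 2 / (3::real) ^ Suc k" for k
  have "t k \<in> cantor_ternary" for k
  proof -
    define d where "d n = (if n = k then 2 else 0::nat)" for n
    have "(\<lambda>n. real (d n) / 3 ^ Suc n) = (\<lambda>n. if n = k then 2 / 3 ^ Suc n else 0)"
      by (auto simp: d_def fun_eq_iff)
    then have "(\<lambda>n. real (d n) / 3 ^ Suc n) sums t k"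
      using sums_single[of k "\<lambda>n. 2 / (3::real) ^ Suc n"] by (simp add: t_def)
    moreover have "\<forall>n. d n \<in> {0,2}" by (simp add: d_def)
    ultimately show ?thesis unfolding cantor_ternary_def by blast
  qed
  moreover have "inj t"
  proof
    fix a b assume "t a = t b"
    then have "(3::real) ^ Suc a = 3 ^ Suc b" unfolding t_def by (simp add: divide_simps)
    then show "a = b" by (metis Suc_inject power_inject_exp one_less_numeral_iff semiring_norm(77))
  qed
  ultimately show ?thesis
    by (meson finite_subset image_subset_iff inj_on_finite subset_UNIV infinite_UNIV_nat)
qed

lemma closedin_coord:
  "closedin (product_topology (\<lambda>_. discrete_topology (UNIV::'e set)) (UNIV::nat set)) {x. x k \<in> A}"
proof -
  have "closedin (product_topology (\<lambda>_. discrete_topology (UNIV::'e set)) (UNIV::nat set))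
     {x \<in> topspace (product_topology (\<lambda>_. discrete_topology (UNIV::'e set)) (UNIV::nat set)). x k \<in> A}"
    by (rule closedin_continuous_map_preimage[OF continuous_map_product_projection]) auto
  then show ?thesis by (simp add: topspace_product_topology)
qed

lemma closedin_INT_UNIV:
  assumes "\<And>i. closedin T (A i)"
  shows "closedin T (\<Inter>i. A i)"
  by (rule closedin_Inter) (use assms in auto)

context BD
begin

lemma X_closed: "closedin (product_topology (\<lambda>_. discrete_topology (UNIV::'e set)) (UNIV::nat set)) X"
proof -
  let ?P = "product_topology (\<lambda>_. discrete_topology (UNIV::'e set)) (UNIV::nat set)"
  have c1: "closedin ?P (\<Inter>k. {x. x k \<in> E (Suc k)})"
    by (rule closedin_INT_UNIV) (rule closedin_coord)
  have c2: "closedin ?P {x. x 0 \<in> src -` {v0}}" by (rule closedin_coord)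
  have c3: "closedin ?P (\<Inter>k. \<Inter>e. {x. x k \<in> - {e}} \<union> {x. x (Suc k) \<in> src -` {rng e}})"
    by (intro closedin_INT_UNIV closedin_Un closedin_coord)
  have "X = (\<Inter>k. {x. x k \<in> E (Suc k)}) \<inter> {x. x 0 \<in> src -` {v0}} \<inter>
     (\<Inter>k. \<Inter>e. {x. x k \<in> - {e}} \<union> {x. x (Suc k) \<in> src -` {rng e}})"
    unfolding path_space_def by auto
  then show ?thesis using c1 c2 c3 by (simp add: closedin_Int)
qed

lemma X_compact: "compactin (cyl_top X) X"
proof -
  let ?P = "product_topology (\<lambda>_. discrete_topology (UNIV::'e set)) (UNIV::nat set)"
  have "compactin ?P (PiE UNIV (\<lambda>k. E (Suc k)))"
    unfolding compactin_PiE using brat unfolding bratteli_def by (auto intro: finite_imp_compactin)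
  moreover have "X \<subseteq> PiE UNIV (\<lambda>k. E (Suc k))" using X_D(1) by auto
  ultimately have "compactin ?P X" using closed_compactin X_closed by blast
  then show ?thesis unfolding cyl_top_def by (simp add: compactin_subtopology)
qed

lemma cyl_t1: "t1_space (cyl_top X)"
  unfolding cyl_top_def
  by (intro Hausdorff_imp_t1_space Hausdorff_space_subtopology)
     (simp add: Hausdorff_space_product_topology Hausdorff_space_discrete_topology)

lemma X_infinite:
  assumes "is_cantor_space (cyl_top X)"
  shows "infinite X"
proof
  assume fin: "finite X"
  obtain f g where fg: "homeomorphic_maps (cyl_top X) (subtopology euclideanreal cantor_ternary) f g"
    using assms unfolding is_cantor_space_def homeomorphic_space_def by blast
  have "topspace (subtopology euclideanreal cantor_ternary) = cantor_ternary" by simp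
  then have i1: "inj_on g cantor_ternary"
    using fg unfolding homeomorphic_maps_def by (metis inj_on_inverseI)
  have i2: "g ` cantor_ternary \<subseteq> X"
    using fg unfolding homeomorphic_maps_def
    by (metis continuous_map_image_subset_topspace topspace_cyl
          \<open>topspace (subtopology euclideanreal cantor_ternary) = cantor_ternary\<close>)
  from i1 i2 have "inj_on g cantor_ternary" "g ` cantor_ternary \<subseteq> X" .
  then have "finite cantor_ternary" using fin by (meson finite_subset inj_on_finite)
  then show False using cantor_infinite by simp
qed

definition cls :: "nat \<Rightarrow> (nat \<Rightarrow> 'e) \<Rightarrow> 'e list set"
  where "cls m x = {l \<in> Pref m. ev l = ev (pre m x)}"

lemma cls_mono_Suc:
  assumes "x \<in> X"
  shows "card (cls m x) \<le> card (cls (Suc m) x)"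
proof (rule card_inj_on_le)
  show "inj_on (\<lambda>l. l @ [x m]) (cls m x)" by (simp add: inj_on_def)
  show "finite (cls (Suc m) x)" unfolding cls_def using finite_Pref by simp
  show "(\<lambda>l. l @ [x m]) ` cls m x \<subseteq> cls (Suc m) x"
  proof
    fix l' assume "l' \<in> (\<lambda>l. l @ [x m]) ` cls m x"
    then obtain l where l: "l \<in> cls m x" "l' = l @ [x m]" by auto
    then obtain y where y: "y \<in> X" "l = pre m y" unfolding cls_def Pref_def by auto
    have "src (y m) = src (x m)" using l(1) y ev_pre assms unfolding cls_def by auto
    then have sX: "splice m y x \<in> X" using splice_X y(1) assms by blast
    have p: "pre (Suc m) (splice m y x) = l'" using l(2) y(2) by (simp add: pre_Suc pre_splice) (simp add: splice_def)
    have "ev l' = ev (pre (Suc m) x)"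
      using ev_pre[OF sX, of "Suc m"] ev_pre[OF assms, of "Suc m"] p by (simp add: splice_def)
    then show "l' \<in> cls (Suc m) x" unfolding cls_def Pref_def using sX p by blast
  qed
qed

lemma cls_mono:
  assumes "x \<in> X" "m \<le> m'"
  shows "card (cls m x) \<le> card (cls m' x)"
  using assms(2) by (induction m' rule: dec_induct) (auto intro: le_trans cls_mono_Suc[OF assms(1)])

lemma full_group_n_X:
  assumes "g \<in> full_group_n X n" "x \<in> X"
  shows "g x \<in> X"
proof -
  have "homeomorphic_map (cyl_top X) (cyl_top X) g" using assms unfolding full_group_n_def by blast
  then have "g ` X = X" using homeomorphic_imp_surjective_map topspace_cyl by metis
  then show ?thesis using assms(2) by blast
qed

lemma cls_unbounded:
  assumes min: "minimal_action X" and inf: "infinite X" and x: "x \<in> X"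
  shows "\<exists>m. M \<le> card (cls m x)"
proof (rule ccontr)
  assume "\<not> ?thesis"
  then have lt: "\<And>m. card (cls m x) < M" by (simp add: not_le)
  define Orb where "Orb = {g x | g. g \<in> full_group X}"
  have OX: "Orb \<subseteq> X" unfolding Orb_def full_group_def using full_group_n_X x by blast
  have "finite Orb"
  proof (rule ccontr)
    assume "infinite Orb"
    then obtain F where F: "finite F" "card F = M" "F \<subseteq> Orb" using infinite_arbitrarily_large by blast
    have "\<forall>y\<in>F. \<exists>n. \<exists>g\<in>full_group_n X n. y = g x" using F(3) unfolding Orb_def full_group_def by blast
    then obtain nn where nn: "\<forall>y\<in>F. \<exists>g\<in>full_group_n X (nn y). y = g x" by metis
    define m where "m = Max (insert 0 (nn ` F))"
    have nnm: "\<And>y. y \<in> F \<Longrightarrow> nn y \<le> m" unfolding m_def using F(1) by simp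
    have tail: "\<And>y k. y \<in> F \<Longrightarrow> k \<ge> m \<Longrightarrow> y k = x k"
    proof -
      fix y k assume "y \<in> F" "k \<ge> m"
      then obtain g where "g \<in> full_group_n X (nn y)" "y = g x" using nn by blast
      then show "y k = x k" using nnm[OF \<open>y\<in>F\<close>] \<open>k \<ge> m\<close> x unfolding full_group_n_def by auto
    qed
    have "card F \<le> card (cls m x)"
    proof (rule card_inj_on_le)
      show "inj_on (pre m) F"
      proof
        fix y z assume "y \<in> F" "z \<in> F" "pre m y = pre m z"
        then show "y = z" using tail pre_eq_iff by (metis not_le ext)
      qed
      show "finite (cls m x)" unfolding cls_def using finite_Pref by simp
      show "pre m ` F \<subseteq> cls m x"
      proof
        fix l assume "l \<in> pre m ` F"
        then obtain y where y: "y \<in> F" "l = pre m y" by auto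
        then have yX: "y \<in> X" using F(3) OX by auto
        have "ev l = ev (pre m x)" using ev_pre[OF yX] ev_pre[OF x] tail[OF y(1)] y(2) by simp
        then show "l \<in> cls m x" unfolding cls_def Pref_def using yX y(2) by blast
      qed
    qed
    then show False using lt[of m] F(2) by simp
  qed
  then have "closedin (cyl_top X) Orb" using cyl_t1 OX unfolding t1_space_closedin_finite topspace_cyl by blast
  then have "(cyl_top X) closure_of Orb = Orb" by (simp add: closure_of_eq)
  moreover have "(cyl_top X) closure_of Orb = X" using min x unfolding minimal_action_def Orb_def by blast
  ultimately show False using \<open>finite Orb\<close> inf by simp
qed

lemma cls_uniform:
  assumes min: "minimal_action X" and inf: "infinite X"
  shows "\<exists>m0. \<forall>m\<ge>m0. \<forall>x\<in>X. M \<le> card (cls m x)"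
proof -
  define U where "U m = {x \<in> X. M \<le> card (cls m x)}" for m
  have oU: "openin (cyl_top X) (U m)" for m
  proof -
    have "U m = {x \<in> X. pre m x \<in> {l. M \<le> card {l' \<in> Pref m. ev l' = ev l}}}"
      unfolding U_def cls_def by simp
    moreover have "openin (cyl_top X) {x \<in> X. pre m x \<in> {l. M \<le> card {l' \<in> Pref m. ev l' = ev l}}}"
      by (rule openin_cyl)
    ultimately show ?thesis by simp
  qed
  have cov: "X \<subseteq> \<Union>(range U)" using cls_unbounded[OF min inf] unfolding U_def by blast
  obtain F where F: "finite F" "F \<subseteq> range U" "X \<subseteq> \<Union>F"
    using X_compact unfolding compactin_def using oU cov by (metis (no_types, lifting) imageE)
  obtain J where J: "finite J" "F = U ` J" using F(1,2) by (meson finite_subset_image)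
  define m0 where "m0 = Max (insert 0 J)"
  have "\<forall>m\<ge>m0. \<forall>x\<in>X. M \<le> card (cls m x)"
  proof (intro allI impI ballI)
    fix m x assume m: "m \<ge> m0" and x: "x \<in> X"
    then obtain j where j: "j \<in> J" "x \<in> U j" using F(3) J(2) by auto
    have "j \<le> m" using j(1) J(1) m unfolding m0_def by (meson Max_ge finite_insert insertCI le_trans)
    moreover have "M \<le> card (cls j x)" using j(2) unfolding U_def by simp
    ultimately show "M \<le> card (cls m x)" using cls_mono[OF x, of j m] by linarith
  qed
  then show ?thesis by blast
qed

end



lemma drop_pre: "drop n (pre m x) = map x [n..<m]"
  by (simp add: pre_def drop_map)

context BD
begin

lemma cyl_sets:
  assumes "\<mu> \<in> inv_measures X"
  shows "{x\<in>X. pre m x \<in> B} \<in> sets \<mu>"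
proof -
  have "sets \<mu> = sigma_sets X {U. openin (cyl_top X) U}" using assms unfolding inv_measures_def by auto
  then show ?thesis using openin_cyl[of m B] by (simp add: sigma_sets.Basic)
qed

lemma meas_bound:
  assumes mu: "\<mu> \<in> inv_measures X" and B: "B \<subseteq> Pref m"
    and G: "\<forall>k<N. pperm m (Gk k) (Gk k)"
    and disj: "\<forall>k<N. \<forall>k'<N. k \<noteq> k' \<longrightarrow> Gk k ` B \<inter> Gk k' ` B = {}"
  shows "real N * measure \<mu> {x\<in>X. pre m x \<in> B} \<le> 1"
proof -
  have ps: "prob_space \<mu>" and inv: "\<forall>g\<in>full_group X. \<forall>A\<in>sets \<mu>. emeasure \<mu> (g -` A \<inter> X) = emeasure \<mu> A"
    using mu unfolding inv_measures_def by auto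
  define C where "C k = {x\<in>X. pre m x \<in> Gk k ` B}" for k
  have eq: "measure \<mu> (C k) = measure \<mu> {x\<in>X. pre m x \<in> B}" if k: "k < N" for k
  proof -
    have p: "pperm m (Gk k) (Gk k)" using G k by auto
    then have pm: "pmap m (Gk k)" and inv2: "\<forall>l\<in>Pref m. Gk k (Gk k l) = l" unfolding pperm_def by auto
    have "gmap m (Gk k) -` C k \<inter> X = {x\<in>X. pre m x \<in> B}"
    proof (intro equalityI subsetI)
      fix x assume "x \<in> gmap m (Gk k) -` C k \<inter> X"
      then have x: "x\<in>X" "Gk k (pre m x) \<in> Gk k ` B" using gmap_X(2)[OF pm] unfolding C_def by auto
      then obtain b where b: "b\<in>B" "Gk k (pre m x) = Gk k b" by auto
      have px: "pre m x \<in> Pref m" using x unfolding Pref_def by auto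
      have "pre m x = Gk k (Gk k (pre m x))" using inv2 px by simp
      also have "\<dots> = Gk k (Gk k b)" using b by simp
      also have "\<dots> = b" using inv2 b B by blast
      finally show "x \<in> {x\<in>X. pre m x \<in> B}" using x b by auto
    next
      fix x assume "x \<in> {x\<in>X. pre m x \<in> B}"
      then show "x \<in> gmap m (Gk k) -` C k \<inter> X" using gmap_X[OF pm] unfolding C_def by auto
    qed
    moreover have "emeasure \<mu> (gmap m (Gk k) -` C k \<inter> X) = emeasure \<mu> (C k)"
      using inv gmap_in_full[OF p] cyl_sets[OF mu] unfolding C_def by blast
    ultimately show ?thesis unfolding measure_def by simp
  qed
  have dj: "disjoint_family_on C {..<N}"
    unfolding disjoint_family_on_def
  proof (intro ballI impI)
    fix k k' assume "k \<in> {..<N}" "k' \<in> {..<N}" "k \<noteq> k'"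
    then have "Gk k ` B \<inter> Gk k' ` B = {}" using disj by simp
    then show "C k \<inter> C k' = {}" unfolding C_def by auto
  qed
  have "measure \<mu> (\<Union>k\<in>{..<N}. C k) = (\<Sum>k\<in>{..<N}. measure \<mu> (C k))"
    by (rule finite_measure.finite_measure_finite_Union[OF prob_space.finite_measure[OF ps]])
       (simp, use cyl_sets[OF mu] in \<open>force simp: C_def\<close>, rule dj)
  also have "\<dots> = real N * measure \<mu> {x\<in>X. pre m x \<in> B}" using eq by simp
  finally show ?thesis using prob_space.prob_le_1[OF ps] by metis
qed

lemma full_group_nD:
  assumes "g \<in> full_group_n X n"
  shows "homeomorphic_map (cyl_top X) (cyl_top X) g" "\<forall>x. x \<notin> X \<longrightarrow> g x = x"
     "\<forall>x\<in>X. \<forall>k\<ge>n. g x k = x k"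
     "\<forall>x\<in>X. \<forall>y\<in>X. (\<forall>k<n. x k = y k) \<longrightarrow> (\<forall>k<n. g x k = g y k)"
proof -
  have "homeomorphic_map (cyl_top X) (cyl_top X) g \<and> (\<forall>x. x \<notin> X \<longrightarrow> g x = x) \<and>
     (\<forall>x\<in>X. \<forall>k\<ge>n. g x k = x k) \<and>
     (\<forall>x\<in>X. \<forall>y\<in>X. (\<forall>k<n. x k = y k) \<longrightarrow> (\<forall>k<n. g x k = g y k))"
    using assms unfolding full_group_n_def by (rule CollectD)
  note c = this
  show "homeomorphic_map (cyl_top X) (cyl_top X) g" by (rule c[THEN conjunct1])
  show "\<forall>x. x \<notin> X \<longrightarrow> g x = x" by (rule c[THEN conjunct2, THEN conjunct1])
  show "\<forall>x\<in>X. \<forall>k\<ge>n. g x k = x k" by (rule c[THEN conjunct2, THEN conjunct2, THEN conjunct1])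
  show "\<forall>x\<in>X. \<forall>y\<in>X. (\<forall>k<n. x k = y k) \<longrightarrow> (\<forall>k<n. g x k = g y k)"
    by (rule c[THEN conjunct2, THEN conjunct2, THEN conjunct2])
qed

lemma full_group_n_mono:
  assumes "g \<in> full_group_n X n" "n \<le> m"
  shows "g \<in> full_group_n X m"
proof -
  note h = full_group_nD[OF assms(1)]
  have "\<forall>x\<in>X. \<forall>y\<in>X. (\<forall>k<m. x k = y k) \<longrightarrow> (\<forall>k<m. g x k = g y k)"
  proof (intro ballI impI allI)
    fix x y k assume xy: "x \<in> X" "y \<in> X" "\<forall>k<m. x k = y k" "k < m"
    show "g x k = g y k"
    proof (cases "k < n")
      case True
      have a: "\<forall>k<n. x k = y k" using xy(3) assms(2) by simp
      have "\<forall>k<n. g x k = g y k" using h(4) xy(1,2) a by blast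
      then show ?thesis using True by blast
    next
      case False
      then have "g x k = x k" "g y k = y k" using h(3) xy(1,2) by simp_all
      then show ?thesis using xy(3,4) by simp
    qed
  qed
  moreover have "\<forall>x\<in>X. \<forall>k\<ge>m. g x k = x k" using h(3) assms(2) by simp
  ultimately show ?thesis unfolding full_group_n_def using h(1,2) by (intro CollectI conjI)
qed

definition sig :: "nat \<Rightarrow> ((nat\<Rightarrow>'e)\<Rightarrow>(nat\<Rightarrow>'e)) \<Rightarrow> 'e list \<Rightarrow> 'e list" where
  "sig m s l = pre m (s (SOME y. y \<in> X \<and> pre m y = l))"

context
  fixes m s assumes s: "s \<in> full_group_n X m"
begin

lemma s_props: "homeomorphic_map (cyl_top X) (cyl_top X) s" "\<And>x. x \<notin> X \<Longrightarrow> s x = x"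
     "\<And>x k. x\<in>X \<Longrightarrow> k \<ge> m \<Longrightarrow> s x k = x k"
     "\<And>x y. x\<in>X \<Longrightarrow> y\<in>X \<Longrightarrow> (\<forall>k<m. x k = y k) \<Longrightarrow> (\<forall>k<m. s x k = s y k)"
proof -
  note h = full_group_nD[OF s]
  show "homeomorphic_map (cyl_top X) (cyl_top X) s" by (rule h(1))
  show "\<And>x. x \<notin> X \<Longrightarrow> s x = x" by (rule h(2)[rule_format])
  show "\<And>x k. x\<in>X \<Longrightarrow> k \<ge> m \<Longrightarrow> s x k = x k" by (rule h(3)[rule_format])
  show "\<And>x y. x\<in>X \<Longrightarrow> y\<in>X \<Longrightarrow> (\<forall>k<m. x k = y k) \<Longrightarrow> (\<forall>k<m. s x k = s y k)"
    using h(4) by blast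
qed

lemma s_X: "x \<in> X \<Longrightarrow> s x \<in> X" using full_group_n_X[OF s] .

lemma s_surj: "s ` X = X"
  using homeomorphic_imp_surjective_map[OF s_props(1)] topspace_cyl by simp

lemma sig_pre: assumes "x \<in> X" shows "sig m s (pre m x) = pre m (s x)"
proof -
  define y where "y = (SOME y. y \<in> X \<and> pre m y = pre m x)"
  have y: "y \<in> X \<and> pre m y = pre m x" unfolding y_def by (rule someI[of _ x]) (use assms in simp)
  then have "\<forall>k<m. s y k = s x k" using s_props(4)[of y x] assms pre_eq_iff by metis
  then show ?thesis unfolding sig_def y_def[symmetric] by (simp add: pre_eq_iff)
qed

lemma sig_pmap: "pmap m (sig m s)"
  unfolding pmap_def
proof
  fix l assume "l \<in> Pref m"
  then obtain x where x: "x \<in> X" "l = pre m x" unfolding Pref_def by auto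
  have "sig m s l = pre m (s x)" using sig_pre x by simp
  moreover have "ev (pre m (s x)) = ev (pre m x)" using ev_pre[OF s_X[OF x(1)]] ev_pre[OF x(1)] s_props(3)[OF x(1)] by simp
  ultimately show "sig m s l \<in> Pref m \<and> ev (sig m s l) = ev l" unfolding Pref_def using s_X x by auto
qed

lemma sig_gmap: "s = gmap m (sig m s)"
proof
  fix x show "s x = gmap m (sig m s) x"
  proof (cases "x \<in> X")
    case True
    then show ?thesis unfolding gmap_def using sig_pre[OF True] s_props(3)[OF True]
      by (auto simp: fun_eq_iff)
  qed (simp add: gmap_def s_props(2))
qed

lemma sig_bij: "bij_betw (sig m s) (Pref m) (Pref m)"
proof -
  have im: "sig m s ` Pref m = Pref m"
  proof
    show "sig m s ` Pref m \<subseteq> Pref m" using sig_pmap unfolding pmap_def by auto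
    show "Pref m \<subseteq> sig m s ` Pref m"
    proof
      fix l assume "l \<in> Pref m"
      then obtain y where y: "y \<in> X" "l = pre m y" unfolding Pref_def by auto
      then obtain x where x: "x \<in> X" "y = s x" using s_surj by blast
      then have "l = sig m s (pre m x)" using sig_pre y by simp
      then show "l \<in> sig m s ` Pref m" using x unfolding Pref_def by blast
    qed
  qed
  moreover have "inj_on (sig m s) (Pref m)"
    by (rule eq_card_imp_inj_on) (use im finite_Pref in auto)
  ultimately show ?thesis unfolding bij_betw_def by blast
qed

lemma sig_pperm: "pperm m (sig m s) (the_inv_into (Pref m) (sig m s))"
proof -
  have b: "bij_betw (sig m s) (Pref m) (Pref m)" by (rule sig_bij)
  have i1: "\<forall>l\<in>Pref m. sig m s (the_inv_into (Pref m) (sig m s) l) = l"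
    using b by (simp add: bij_betw_def f_the_inv_into_f)
  have i2: "\<forall>l\<in>Pref m. the_inv_into (Pref m) (sig m s) (sig m s l) = l"
    using b by (simp add: bij_betw_def the_inv_into_f_f)
  have i3: "\<forall>l\<in>Pref m. the_inv_into (Pref m) (sig m s) l \<in> Pref m"
    using b by (metis bij_betw_def the_inv_into_into subset_refl)
  have "pmap m (the_inv_into (Pref m) (sig m s))"
    unfolding pmap_def
  proof
    fix l assume l: "l \<in> Pref m"
    have "ev (sig m s (the_inv_into (Pref m) (sig m s) l)) = ev (the_inv_into (Pref m) (sig m s) l)"
      using sig_pmap i3 l unfolding pmap_def by blast
    then show "the_inv_into (Pref m) (sig m s) l \<in> Pref m \<and> ev (the_inv_into (Pref m) (sig m s) l) = ev l"
      using i1 i3 l by simp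
  qed
  then show ?thesis unfolding pperm_def using sig_pmap i1 i2 by blast
qed

end

lemma sig_split:
  assumes s: "s \<in> full_group_n X n" and nm: "n \<le> m" and x: "x \<in> X"
  shows "sig m s (pre m x) = sig n s (pre n x) @ drop n (pre m x)"
proof -
  have sm: "s \<in> full_group_n X m" using full_group_n_mono[OF s nm] .
  have "sig m s (pre m x) = pre m (s x)" using sig_pre[OF sm x] .
  also have "\<dots> = take n (pre m (s x)) @ drop n (pre m (s x))" by simp
  also have "take n (pre m (s x)) = pre n (s x)" using take_pre[OF nm] .
  also have "\<dots> = sig n s (pre n x)" using sig_pre[OF s x] by simp
  also have "drop n (pre m (s x)) = drop n (pre m x)"
    unfolding drop_pre using s_props(3)[OF s x] by simp
  finally show ?thesis .
qed

end



definition Mc :: "nat \<Rightarrow> nat \<Rightarrow> nat \<Rightarrow> nat" where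
  "Mc r c a = (if c = 0 then 0 else if c = 1 then a else a * 2^r)"

lemma Mc_xor: "Mc r c a XOR Mc r c b = Mc r c (a XOR b)"
  by (simp add: Mc_def push_bit_eq_mult[symmetric] push_bit_xor)

lemma Mc_lt: "a < 2^r \<Longrightarrow> Mc r c a < 2^(2*r)"
proof -
  assume a: "a < 2^r"
  have "a * 2^r < 2^r * 2^r" using a by simp
  also have "\<dots> = 2^(2*r)" by (simp add: power_add[symmetric] mult_2)
  finally have "a * 2^r < 2^(2*r)" .
  moreover have "(2::nat)^r \<le> 2^(2*r)" by (intro power_increasing) auto
  then have "a < 2^(2*r)" using a by linarith
  ultimately show ?thesis by (simp add: Mc_def)
qed

lemma Mc_diff:
  assumes "a < 2^r" "b < 2^r" "a \<noteq> b" "c1 < 3" "c2 < 3" "c1 \<noteq> c2"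
  shows "(Mc r c1 a XOR Mc r c1 b) XOR (Mc r c2 a XOR Mc r c2 b) \<noteq> 0"
proof -
  define d where "d = a XOR b"
  have d0: "d \<noteq> 0" using assms(3) xor_eq_0 d_def by simp
  have dl: "d < 2^r" using xor_lt assms(1,2) d_def by blast
  have r0: "r \<noteq> 0" using dl d0 by (cases r) auto
  have "(2::nat)^1 \<le> 2^r" using r0 by (intro power_increasing) auto
  then have "d * 2 \<le> d * 2^r" by simp
  then have dd: "d \<noteq> d * 2^r" using d0 by linarith
  have "Mc r c1 d \<noteq> Mc r c2 d" using assms(4-6) d0 dd r0 by (auto simp: Mc_def)
  then show ?thesis unfolding Mc_xor d_def[symmetric] using xor_eq_0 by simp
qed

context BD
begin

definition Seg :: "nat \<Rightarrow> nat \<Rightarrow> ('v \<times> 'e list) set" where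
  "Seg n m = (\<lambda>l. (ev (take n l), drop n l)) ` Pref m"

definition kap :: "('v \<times> 'e list) \<Rightarrow> ('v \<times> 'v)" where
  "kap c = (fst c, rng (last (snd c)))"

lemma Pref_length: "l \<in> Pref m \<Longrightarrow> length l = m" unfolding Pref_def by auto

lemma finite_Seg: "finite (Seg n m)" unfolding Seg_def using finite_Pref by simp

lemma dec1:
  assumes "n < m" "l \<in> Pref m"
  shows "take n l \<in> Pref n" "(ev (take n l), drop n l) \<in> Seg n m" "drop n l \<noteq> []"
    "ev l = rng (last (drop n l))" "take n l @ drop n l = l"
proof -
  obtain x where x: "x \<in> X" "l = pre m x" using assms(2) unfolding Pref_def by auto
  show "take n l \<in> Pref n" using x take_pre[of n m x] assms(1) unfolding Pref_def by auto
  show "(ev (take n l), drop n l) \<in> Seg n m" unfolding Seg_def using assms(2) by blast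
  show dn: "drop n l \<noteq> []" using x assms(1) by simp
  have "l \<noteq> []" using dn by auto
  then show "ev l = rng (last (drop n l))" using x assms(1) by (simp add: ev_def last_drop)
  show "take n l @ drop n l = l" by simp
qed

lemma Seg_D:
  assumes "n < m" "(v, q) \<in> Seg n m"
  shows "q \<noteq> []" "length q = m - n"
  using assms unfolding Seg_def by (auto dest: Pref_length)

lemma dec2:
  assumes "n < m" "p \<in> Pref n" "(ev p, q) \<in> Seg n m"
  shows "p @ q \<in> Pref m" "ev (p @ q) = rng (last q)" "take n (p @ q) = p" "drop n (p @ q) = q"
proof -
  have lp: "length p = n" using assms(2) Pref_length by blast
  obtain l where l: "l \<in> Pref m" "ev p = ev (take n l)" "q = drop n l" using assms(3) unfolding Seg_def by auto
  obtain z where z: "z \<in> X" "l = pre m z" using l(1) unfolding Pref_def by auto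
  obtain y where y: "y \<in> X" "p = pre n y" using assms(2) unfolding Pref_def by auto
  have "src (y n) = src (z n)"
    using ev_pre[OF y(1), of n] ev_pre[OF z(1), of n] l(2) y(2) z(2) take_pre[of n m z] assms(1) by simp
  then have wX: "splice n y z \<in> X" using splice_X y(1) z(1) by blast
  have "pre m (splice n y z) = take n (pre m (splice n y z)) @ drop n (pre m (splice n y z))" by simp
  also have "take n (pre m (splice n y z)) = p"
    using take_pre[of n m "splice n y z"] assms(1) pre_splice[of n y z] y(2) by simp
  also have "drop n (pre m (splice n y z)) = q"
  proof -
    have "drop n (pre m (splice n y z)) = map (splice n y z) [n..<m]" by (rule drop_pre)
    also have "\<dots> = map z [n..<m]" by (rule map_cong) (auto simp: splice_def)
    also have "\<dots> = drop n (pre m z)" by (rule drop_pre[symmetric])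
    finally show ?thesis using l(3) z(2) by simp
  qed
  finally have "pre m (splice n y z) = p @ q" .
  then show "p @ q \<in> Pref m" using wX unfolding Pref_def by (metis image_eqI)
  show "ev (p @ q) = rng (last q)" using Seg_D[OF assms(1,3)] by (simp add: ev_def)
  show "take n (p @ q) = p" "drop n (p @ q) = q" using lp by simp_all
qed

lemma pmap_comp: "pmap m F \<Longrightarrow> pmap m G \<Longrightarrow> pmap m (F \<circ> G)"
  unfolding pmap_def by auto

lemma supp_gmap: "pmap m F \<Longrightarrow> supp X (gmap m F) = {x \<in> X. F (pre m x) \<noteq> pre m x}"
  unfolding supp_def using gmap_fix by auto

end

locale Constr = BD V E src rng v0
  for V :: "nat \<Rightarrow> 'v set" and E :: "nat \<Rightarrow> 'e set" and src rng :: "'e \<Rightarrow> 'v" and v0 :: 'v +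
  fixes n m :: nat and s :: "(nat \<Rightarrow> 'e) \<Rightarrow> (nat \<Rightarrow> 'e)" and r :: nat
    and act :: "nat \<Rightarrow> ('v \<times> 'e list) \<Rightarrow> ('v \<times> 'e list)" and Bad :: "('v \<times> 'e list) set"
    and col :: "'e list \<Rightarrow> nat"
  assumes s: "s \<in> full_group_n X n" and nm: "n < m"
    and A1: "\<forall>d<2^(2*r). \<forall>c\<in>Seg n m. act d c \<in> Seg n m \<and> kap (act d c) = kap c"
    and A2: "\<forall>c\<in>Seg n m. act 0 c = c"
    and A3: "\<forall>d<2^(2*r). \<forall>d'<2^(2*r). \<forall>c\<in>Seg n m. act d (act d' c) = act (d XOR d') c"
    and A4: "\<forall>c\<in>Seg n m - Bad. \<forall>d<2^(2*r). act d c = c \<longrightarrow> d = 0"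
    and C1: "\<forall>p\<in>{p\<in>Pref n. sig n s p \<noteq> p}. col p < 3 \<and>
               (sig n s p \<in> {p\<in>Pref n. sig n s p \<noteq> p} \<and> sig n s p \<noteq> p \<longrightarrow> col (sig n s p) \<noteq> col p)"
begin

abbreviation "\<sigma> \<equiv> sig n s"
abbreviation "\<sigma>i \<equiv> the_inv_into (Pref n) (sig n s)"
abbreviation "\<sigma>' \<equiv> sig m s"
abbreviation "\<sigma>'i \<equiv> the_inv_into (Pref m) (sig m s)"
abbreviation "S \<equiv> {p\<in>Pref n. sig n s p \<noteq> p}"
abbreviation "K \<equiv> (2::nat)^(2*r)"

definition A :: "nat \<Rightarrow> 'v \<Rightarrow> 'e list \<Rightarrow> 'e list" where "A d v q = snd (act d (v, q))"
definition \<psi> :: "nat \<Rightarrow> 'e list \<Rightarrow> nat" where "\<psi> a p = Mc r (col p) a"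
definition \<Phi> :: "nat \<Rightarrow> 'e list \<Rightarrow> 'e list" where
  "\<Phi> a l = (if take n l \<in> S then take n l @ A (\<psi> a (take n l)) (ev (take n l)) (drop n l) else l)"

lemma sm: "s \<in> full_group_n X m" using full_group_n_mono[OF s] nm by simp

lemma A_props:
  assumes "(v, q) \<in> Seg n m" "d < K"
  shows "act d (v, q) = (v, A d v q)" "(v, A d v q) \<in> Seg n m" "rng (last (A d v q)) = rng (last q)"
proof -
  have h: "act d (v, q) \<in> Seg n m" "kap (act d (v, q)) = kap (v, q)" using A1 assms by auto
  then show "act d (v, q) = (v, A d v q)" unfolding kap_def A_def by (metis prod.collapse fst_conv prod.inject)
  then show "(v, A d v q) \<in> Seg n m" using h by simp
  show "rng (last (A d v q)) = rng (last q)" using h unfolding kap_def A_def by simp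
qed

lemma A_comp:
  assumes "(v, q) \<in> Seg n m" "d < K" "d' < K"
  shows "A d v (A d' v q) = A (d XOR d') v q"
proof -
  have "act d (act d' (v,q)) = act (d XOR d') (v,q)" using A3 assms by auto
  then show ?thesis using A_props[OF assms(1) assms(3)] unfolding A_def by simp
qed

lemma A_zero: "(v, q) \<in> Seg n m \<Longrightarrow> A 0 v q = q"
  using A2 unfolding A_def by auto

lemma A_free: "(v, q) \<in> Seg n m \<Longrightarrow> (v, q) \<notin> Bad \<Longrightarrow> d < K \<Longrightarrow> A d v q = q \<Longrightarrow> d = 0"
  using A4 A_props(1)[of v q d] unfolding A_def by auto

lemma psi_lt: "a < 2^r \<Longrightarrow> \<psi> a p < K" unfolding \<psi>_def by (rule Mc_lt)

lemma sig_n: "bij_betw \<sigma> (Pref n) (Pref n)" "pmap n \<sigma>"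
  using sig_bij[OF s] sig_pmap[OF s] by auto

lemma sigma_props:
  assumes "p \<in> Pref n"
  shows "\<sigma> p \<in> Pref n" "ev (\<sigma> p) = ev p" "\<sigma>i p \<in> Pref n" "\<sigma> (\<sigma>i p) = p" "\<sigma>i (\<sigma> p) = p" "ev (\<sigma>i p) = ev p"
proof -
  have b: "bij_betw \<sigma> (Pref n) (Pref n)" by (rule sig_n(1))
  show "\<sigma> p \<in> Pref n" "ev (\<sigma> p) = ev p" using sig_n(2) assms unfolding pmap_def by auto
  show i3: "\<sigma>i p \<in> Pref n" using b assms by (metis bij_betw_def the_inv_into_into subset_refl)
  show i1: "\<sigma> (\<sigma>i p) = p" using b assms by (simp add: bij_betw_def f_the_inv_into_f)
  show "\<sigma>i (\<sigma> p) = p" using b assms by (simp add: bij_betw_def the_inv_into_f_f)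
  show "ev (\<sigma>i p) = ev p" using sig_n(2) i3 i1 unfolding pmap_def by metis
qed

lemma S_closed:
  assumes "p \<in> S"
  shows "\<sigma> p \<in> S" "\<sigma>i p \<in> S"
proof -
  have p: "p \<in> Pref n" "\<sigma> p \<noteq> p" using assms by auto
  have inj: "inj_on \<sigma> (Pref n)" using sig_n(1) bij_betw_def by blast
  have "\<sigma> (\<sigma> p) \<noteq> \<sigma> p" using inj p sigma_props(1)[OF p(1)] inj_on_eq_iff by metis
  then show "\<sigma> p \<in> S" using sigma_props(1)[OF p(1)] by simp
  have "\<sigma> (\<sigma>i p) \<noteq> \<sigma>i p" using p sigma_props(4)[OF p(1)] by metis
  then show "\<sigma>i p \<in> S" using sigma_props(3)[OF p(1)] by simp
qed

lemma sig'_split: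
  assumes "p \<in> Pref n" "(ev p, q) \<in> Seg n m"
  shows "\<sigma>' (p @ q) = \<sigma> p @ q"
proof -
  obtain x where x: "x \<in> X" "pre m x = p @ q" using dec2(1)[OF nm assms] unfolding Pref_def by auto
  have "pre n x = p" using take_pre[of n m x] nm x(2) dec2(3)[OF nm assms] by simp
  moreover have "drop n (pre m x) = q" using x(2) dec2(4)[OF nm assms] by simp
  ultimately show ?thesis using sig_split[OF s less_imp_le[OF nm] x(1)] x(2) by simp
qed

lemma sig'_inv:
  assumes "p \<in> Pref n" "(ev p, q) \<in> Seg n m"
  shows "\<sigma>'i (p @ q) = \<sigma>i p @ q"
proof -
  have b: "bij_betw \<sigma>' (Pref m) (Pref m)" by (rule sig_bij[OF sm])
  have e: "ev (\<sigma>i p) = ev p" "\<sigma>i p \<in> Pref n" using sigma_props assms(1) by auto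
  then have "(ev (\<sigma>i p), q) \<in> Seg n m" using assms(2) by simp
  then have "\<sigma>' (\<sigma>i p @ q) = p @ q" "\<sigma>i p @ q \<in> Pref m"
    using sig'_split[OF e(2)] sigma_props(4)[OF assms(1)] dec2(1)[OF nm e(2)] by auto
  then show ?thesis using b by (metis bij_betw_def the_inv_into_f_f)
qed

lemma Phi_S:
  assumes "p \<in> S" "(ev p, q) \<in> Seg n m"
  shows "\<Phi> a (p @ q) = p @ A (\<psi> a p) (ev p) q"
proof -
  have "length p = n" using assms(1) Pref_length by blast
  then show ?thesis unfolding \<Phi>_def using assms(1) by simp
qed

lemma Phi_nS:
  assumes "p \<in> Pref n" "p \<notin> S" "(ev p, q) \<in> Seg n m"
  shows "\<Phi> a (p @ q) = p @ q"
proof -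
  have "length p = n" using assms(1) Pref_length by blast
  then have t: "take n (p @ q) = p" by simp
  show ?thesis unfolding \<Phi>_def t by (rule if_not_P[OF assms(2)])
qed

lemma Pref_dec:
  assumes "l \<in> Pref m"
  obtains p q where "l = p @ q" "p \<in> Pref n" "(ev p, q) \<in> Seg n m"
  using dec1[OF nm assms] by metis

lemma Phi_pperm:
  assumes a: "a < 2^r"
  shows "pperm m (\<Phi> a) (\<Phi> a)"
proof -
  have key: "\<Phi> a l \<in> Pref m \<and> ev (\<Phi> a l) = ev l \<and> \<Phi> a (\<Phi> a l) = l" if l: "l \<in> Pref m" for l
  proof -
    obtain p q where pq: "l = p @ q" "p \<in> Pref n" "(ev p, q) \<in> Seg n m" using Pref_dec[OF l] by blast
    show ?thesis
    proof (cases "p \<in> S")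
      case True
      define d where "d = \<psi> a p"
      have d: "d < K" using psi_lt[OF a] d_def by simp
      have s1: "(ev p, A d (ev p) q) \<in> Seg n m" using A_props(2)[OF pq(3) d] .
      have e1: "\<Phi> a l = p @ A d (ev p) q" using Phi_S[OF True pq(3)] pq(1) d_def by simp
      have "\<Phi> a (\<Phi> a l) = p @ A d (ev p) (A d (ev p) q)" using Phi_S[OF True s1] e1 d_def by simp
      also have "\<dots> = p @ q" using A_comp[OF pq(3) d d] A_zero[OF pq(3)] by simp
      finally have "\<Phi> a (\<Phi> a l) = l" using pq(1) by simp
      moreover have "\<Phi> a l \<in> Pref m" using e1 dec2(1)[OF nm pq(2) s1] by simp
      moreover have "ev (\<Phi> a l) = ev l"
        using e1 dec2(2)[OF nm pq(2) s1] dec2(2)[OF nm pq(2) pq(3)] A_props(3)[OF pq(3) d] pq(1) by simp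
      ultimately show ?thesis by blast
    next
      case False
      then show ?thesis using Phi_nS[OF pq(2) False pq(3)] pq(1) l by simp
    qed
  qed
  then show ?thesis unfolding pperm_def pmap_def by blast
qed

definition h :: "nat \<Rightarrow> (nat \<Rightarrow> 'e) \<Rightarrow> (nat \<Rightarrow> 'e)" where "h a = gmap m (\<Phi> a)"
definition t :: "nat \<Rightarrow> (nat \<Rightarrow> 'e) \<Rightarrow> (nat \<Rightarrow> 'e)" where "t a = h a \<circ> s \<circ> inv (h a)"

lemma sig'_pperm: "pperm m \<sigma>' \<sigma>'i" by (rule sig_pperm[OF sm])

lemma h_inv: "a < 2^r \<Longrightarrow> inv (h a) = h a"
  using gmap_inv Phi_pperm unfolding pperm_def h_def by blast

lemma t_gmap: "a < 2^r \<Longrightarrow> t a = gmap m (\<Phi> a \<circ> \<sigma>' \<circ> \<Phi> a)"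
proof -
  assume a: "a < 2^r"
  have p: "pmap m (\<Phi> a)" "pmap m \<sigma>'" using Phi_pperm[OF a] sig'_pperm unfolding pperm_def by auto
  have "t a = gmap m (\<Phi> a) \<circ> gmap m \<sigma>' \<circ> gmap m (\<Phi> a)"
    unfolding t_def h_inv[OF a] unfolding h_def using sig_gmap[OF sm] by simp
  also have "\<dots> = gmap m (\<Phi> a) \<circ> (gmap m \<sigma>' \<circ> gmap m (\<Phi> a))" by (simp add: comp_assoc)
  also have "\<dots> = gmap m (\<Phi> a) \<circ> gmap m (\<sigma>' \<circ> \<Phi> a)" using gmap_comp[OF p(1), of \<sigma>'] by simp
  also have "\<dots> = gmap m (\<Phi> a \<circ> (\<sigma>' \<circ> \<Phi> a))" using gmap_comp[OF pmap_comp[OF p(2) p(1)], of "\<Phi> a"] by simp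
  also have "\<dots> = gmap m (\<Phi> a \<circ> \<sigma>' \<circ> \<Phi> a)" by (simp add: comp_assoc)
  finally show ?thesis .
qed

lemma pperm_comp: "pperm m F F' \<Longrightarrow> pperm m G G' \<Longrightarrow> pperm m (F \<circ> G) (G' \<circ> F')"
  unfolding pperm_def pmap_def by auto

lemma t_pperm: "a < 2^r \<Longrightarrow> pperm m (\<Phi> a \<circ> \<sigma>' \<circ> \<Phi> a) (\<Phi> a \<circ> \<sigma>'i \<circ> \<Phi> a)"
proof -
  assume a: "a < 2^r"
  have "pperm m ((\<Phi> a \<circ> \<sigma>') \<circ> \<Phi> a) (\<Phi> a \<circ> (\<sigma>'i \<circ> \<Phi> a))"
    by (intro pperm_comp Phi_pperm[OF a] sig'_pperm)
  then show ?thesis by (simp add: comp_assoc)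
qed

lemma t_full: "a < 2^r \<Longrightarrow> t a \<in> full_group X"
  using t_gmap t_pperm gmap_in_full by metis

lemma t_conj: "a < 2^r \<Longrightarrow> conj_in X (t a) s"
proof -
  assume a: "a < 2^r"
  have "h a \<in> full_group X" using gmap_in_full[OF Phi_pperm[OF a]] h_def by simp
  then show ?thesis unfolding conj_in_def t_def by (intro bexI[of _ "h a"]) simp_all
qed

lemma t_inv: "a < 2^r \<Longrightarrow> inv (t a) = gmap m (\<Phi> a \<circ> \<sigma>'i \<circ> \<Phi> a)"
proof -
  assume a: "a < 2^r"
  have pp: "pperm m (\<Phi> a \<circ> \<sigma>' \<circ> \<Phi> a) (\<Phi> a \<circ> \<sigma>'i \<circ> \<Phi> a)" by (rule t_pperm[OF a])
  show ?thesis unfolding t_gmap[OF a]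
    using gmap_inv[of m "\<Phi> a \<circ> \<sigma>' \<circ> \<Phi> a" "\<Phi> a \<circ> \<sigma>'i \<circ> \<Phi> a"] pp unfolding pperm_def by blast
qed

lemma t_fix_iff:
  assumes a: "a < 2^r" and l: "l \<in> Pref m"
  shows "(\<Phi> a \<circ> \<sigma>' \<circ> \<Phi> a) l = l \<longleftrightarrow> \<sigma>' l = l"
proof -
  obtain p q where pq: "l = p @ q" "p \<in> Pref n" "(ev p, q) \<in> Seg n m" using Pref_dec[OF l] by blast
  show ?thesis
  proof (cases "p \<in> S")
    case True
    define q1 where "q1 = A (\<psi> a p) (ev p) q"
    have d: "\<psi> a p < K" using psi_lt[OF a] by simp
    have s1: "(ev p, q1) \<in> Seg n m" using A_props(2)[OF pq(3) d] q1_def by simp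
    have sp: "\<sigma> p \<in> S" "ev (\<sigma> p) = ev p" using S_closed True sigma_props(2) pq(2) by auto
    have "(\<Phi> a \<circ> \<sigma>' \<circ> \<Phi> a) l = \<Phi> a (\<sigma> p @ q1)"
      using Phi_S[OF True pq(3)] sig'_split[OF pq(2) s1] pq(1) q1_def by simp
    also have "\<dots> = \<sigma> p @ A (\<psi> a (\<sigma> p)) (ev p) q1" using Phi_S[OF sp(1)] s1 sp(2) by simp
    finally have e: "(\<Phi> a \<circ> \<sigma>' \<circ> \<Phi> a) l = \<sigma> p @ A (\<psi> a (\<sigma> p)) (ev p) q1" .
    have lp: "length p = n" "length (\<sigma> p) = n" using pq(2) sp(1) Pref_length by auto
    have "(\<Phi> a \<circ> \<sigma>' \<circ> \<Phi> a) l \<noteq> l" using e pq(1) lp True by auto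
    moreover have "\<sigma>' l \<noteq> l" using sig'_split[OF pq(2) pq(3)] pq(1) lp True by auto
    ultimately show ?thesis by simp
  next
    case False
    then have "\<sigma> p = p" using pq(2) by simp
    then show ?thesis using Phi_nS[OF pq(2) False pq(3)] sig'_split[OF pq(2) pq(3)] pq(1) by simp
  qed
qed

lemma t_supp: "a < 2^r \<Longrightarrow> supp X (t a) = supp X s"
proof -
  assume a: "a < 2^r"
  have p: "pmap m (\<Phi> a \<circ> \<sigma>' \<circ> \<Phi> a)" "pmap m \<sigma>'" using t_pperm[OF a] sig'_pperm unfolding pperm_def by auto
  have "supp X (t a) = {x \<in> X. (\<Phi> a \<circ> \<sigma>' \<circ> \<Phi> a) (pre m x) \<noteq> pre m x}"
    using t_gmap[OF a] supp_gmap[OF p(1)] by simp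
  also have "\<dots> = {x \<in> X. \<sigma>' (pre m x) \<noteq> pre m x}"
    using t_fix_iff[OF a] unfolding Pref_def by auto
  also have "\<dots> = supp X s" using supp_gmap[OF p(2)] sig_gmap[OF sm] by simp
  finally show ?thesis .
qed

definition W :: "nat \<Rightarrow> nat \<Rightarrow> 'e list \<Rightarrow> 'e list" where
  "W a b = (\<Phi> a \<circ> \<sigma>' \<circ> \<Phi> a) \<circ> (\<Phi> b \<circ> \<sigma>'i \<circ> \<Phi> b)"

definition BadPre :: "'e list set" where
  "BadPre = {l \<in> Pref m. take n l \<in> S \<and> (ev (take n l), drop n l) \<in> Bad}"

lemma W_calc:
  assumes a: "a < 2^r" and b: "b < 2^r" and p: "p \<in> S" and pq: "(ev p, q) \<in> Seg n m"
  shows "W a b (p @ q) = p @ A ((\<psi> a p XOR \<psi> b p) XOR (\<psi> a (\<sigma>i p) XOR \<psi> b (\<sigma>i p))) (ev p) q"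
proof -
  define v where "v = ev p"
  have pP: "p \<in> Pref n" using p by simp
  have ip: "\<sigma>i p \<in> S" "ev (\<sigma>i p) = v" "\<sigma> (\<sigma>i p) = p" "\<sigma>i p \<in> Pref n"
    using S_closed(2)[OF p] sigma_props[OF pP] v_def by auto
  have pq': "(v, q) \<in> Seg n m" using pq v_def by simp
  have da: "\<psi> a p < K" "\<psi> a (\<sigma>i p) < K" and db: "\<psi> b p < K" "\<psi> b (\<sigma>i p) < K"
    using psi_lt a b by auto
  define q1 where "q1 = A (\<psi> b p) v q"
  have s1: "(v, q1) \<in> Seg n m" using A_props(2)[OF pq' db(1)] q1_def by simp
  have e1: "\<Phi> b (p @ q) = p @ q1" using Phi_S[OF p pq] q1_def v_def by simp
  have e2: "\<sigma>'i (p @ q1) = \<sigma>i p @ q1" using sig'_inv[OF pP] s1 v_def by simp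
  define q2 where "q2 = A (\<psi> b (\<sigma>i p)) v q1"
  have s2: "(v, q2) \<in> Seg n m" using A_props(2)[OF s1 db(2)] q2_def by simp
  have e3: "\<Phi> b (\<sigma>i p @ q1) = \<sigma>i p @ q2" using Phi_S[OF ip(1)] s1 ip(2) q2_def by simp
  define q3 where "q3 = A (\<psi> a (\<sigma>i p)) v q2"
  have s3: "(v, q3) \<in> Seg n m" using A_props(2)[OF s2 da(2)] q3_def by simp
  have e4: "\<Phi> a (\<sigma>i p @ q2) = \<sigma>i p @ q3" using Phi_S[OF ip(1)] s2 ip(2) q3_def by simp
  have e5: "\<sigma>' (\<sigma>i p @ q3) = p @ q3" using sig'_split[OF ip(4)] s3 ip(2,3) by simp
  define q4 where "q4 = A (\<psi> a p) v q3"
  have e6: "\<Phi> a (p @ q3) = p @ q4" using Phi_S[OF p] s3 v_def q4_def by simp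
  have "W a b (p @ q) = p @ q4" unfolding W_def using e1 e2 e3 e4 e5 e6 by simp
  also have "q4 = A (\<psi> a p XOR (\<psi> a (\<sigma>i p) XOR (\<psi> b (\<sigma>i p) XOR \<psi> b p))) v q"
  proof -
    have x1: "\<psi> b (\<sigma>i p) XOR \<psi> b p < K" using db xor_lt by blast
    have x2: "\<psi> a (\<sigma>i p) XOR (\<psi> b (\<sigma>i p) XOR \<psi> b p) < K" using da(2) x1 xor_lt by blast
    have "q2 = A (\<psi> b (\<sigma>i p) XOR \<psi> b p) v q" using A_comp[OF pq' db(2) db(1)] q2_def q1_def by simp
    then have "q3 = A (\<psi> a (\<sigma>i p) XOR (\<psi> b (\<sigma>i p) XOR \<psi> b p)) v q" using A_comp[OF pq' da(2) x1] q3_def by simp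
    then show ?thesis using A_comp[OF pq' da(1) x2] q4_def by simp
  qed
  finally show ?thesis unfolding v_def by (simp add: xor.assoc xor.commute xor.left_commute)
qed

lemma W_props:
  assumes a: "a < 2^r" and b: "b < 2^r" and l: "l \<in> Pref m"
  shows "W a b (W a b l) = l" "a \<noteq> b \<Longrightarrow> \<sigma>' l \<noteq> l \<Longrightarrow> W a b l = l \<Longrightarrow> l \<in> BadPre"
proof -
  obtain p q where pq: "l = p @ q" "p \<in> Pref n" "(ev p, q) \<in> Seg n m" using Pref_dec[OF l] by blast
  have lp: "length p = n" using pq(2) Pref_length by blast
  have "W a b (W a b l) = l \<and> (a \<noteq> b \<longrightarrow> \<sigma>' l \<noteq> l \<longrightarrow> W a b l = l \<longrightarrow> l \<in> BadPre)"
  proof (cases "p \<in> S")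
    case True
    define D where "D = (\<psi> a p XOR \<psi> b p) XOR (\<psi> a (\<sigma>i p) XOR \<psi> b (\<sigma>i p))"
    have DK: "D < K" unfolding D_def using psi_lt a b xor_lt by metis
    have s1: "(ev p, A D (ev p) q) \<in> Seg n m" using A_props(2)[OF pq(3) DK] .
    have w1: "W a b l = p @ A D (ev p) q" using W_calc[OF a b True pq(3)] pq(1) D_def by simp
    have "W a b (W a b l) = p @ A D (ev p) (A D (ev p) q)" using W_calc[OF a b True s1] w1 D_def by simp
    also have "\<dots> = l" using A_comp[OF pq(3) DK DK] A_zero[OF pq(3)] pq(1) by simp
    finally have r1: "W a b (W a b l) = l" .
    have r2: "l \<in> BadPre" if ab: "a \<noteq> b" and fx: "W a b l = l"
    proof -
      have fq: "A D (ev p) q = q" using fx w1 pq(1) by simp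
      have cp: "col p < 3" "col (\<sigma>i p) < 3" using C1 True S_closed(2)[OF True] by auto
      have qS: "\<sigma>i p \<in> S" by (rule S_closed(2)[OF True])
      have h1: "\<sigma> (\<sigma>i p) \<in> S \<and> \<sigma> (\<sigma>i p) \<noteq> \<sigma>i p" using qS S_closed(1)[OF qS] by simp
      have "col (\<sigma> (\<sigma>i p)) \<noteq> col (\<sigma>i p)" using bspec[OF C1 qS] h1 by blast
      then have cne: "col p \<noteq> col (\<sigma>i p)" using sigma_props(4) True by simp
      have "D \<noteq> 0" unfolding D_def \<psi>_def using Mc_diff[OF a b ab cp cne] by simp
      then have "(ev p, q) \<in> Bad" using A_free[OF pq(3) _ DK fq] by blast
      then show ?thesis unfolding BadPre_def using l pq(1) lp True by simp
    qed
    show ?thesis using r1 r2 by blast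
  next
    case False
    have sp: "\<sigma> p = p" using False pq(2) by simp
    have "\<sigma>i p = p" using sigma_props(5)[OF pq(2)] sp by simp
    then have "W a b l = l" unfolding W_def
      using Phi_nS[OF pq(2) False pq(3)] sig'_split[OF pq(2) pq(3)] sig'_inv[OF pq(2) pq(3)] sp pq(1) by simp
    moreover have "\<sigma>' l = l" using sig'_split[OF pq(2) pq(3)] sp pq(1) by simp
    ultimately show ?thesis by simp
  qed
  then show "W a b (W a b l) = l" "a \<noteq> b \<Longrightarrow> \<sigma>' l \<noteq> l \<Longrightarrow> W a b l = l \<Longrightarrow> l \<in> BadPre" by blast+
qed

lemma tt_gmap:
  assumes a: "a < 2^r" and b: "b < 2^r"
  shows "t a \<circ> inv (t b) = gmap m (W a b)"
proof -
  have p: "pmap m (\<Phi> b \<circ> \<sigma>'i \<circ> \<Phi> b)" using t_pperm[OF b] unfolding pperm_def by auto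
  show ?thesis unfolding t_gmap[OF a] t_inv[OF b] W_def using gmap_comp[OF p] by simp
qed

lemma W_pmap: "a < 2^r \<Longrightarrow> b < 2^r \<Longrightarrow> pmap m (W a b)"
  unfolding W_def using t_pperm pmap_comp unfolding pperm_def by metis

lemma tt_even: "a < 2^r \<Longrightarrow> b < 2^r \<Longrightarrow> even_cycles X (t a \<circ> inv (t b))"
proof -
  assume a: "a < 2^r" and b: "b < 2^r"
  have "gmap m (W a b) \<circ> gmap m (W a b) = id"
    using gmap_comp[OF W_pmap[OF a b], of "W a b"] gmap_id[of m "W a b \<circ> W a b"] W_props(1)[OF a b] by simp
  then have "\<forall>x\<in>X. gmap m (W a b) (gmap m (W a b) x) = x" by (metis comp_apply id_apply)
  then show ?thesis unfolding tt_gmap[OF a b] by (rule even_cycles_inv)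
qed

lemma tt_diff:
  assumes a: "a < 2^r" and b: "b < 2^r" and ab: "a \<noteq> b"
  shows "supp X s - supp X (t a \<circ> inv (t b)) \<subseteq> {x\<in>X. pre m x \<in> BadPre}"
proof
  fix x assume x: "x \<in> supp X s - supp X (t a \<circ> inv (t b))"
  have p: "pmap m (W a b)" "pmap m \<sigma>'" using W_pmap[OF a b] sig'_pperm unfolding pperm_def by auto
  have xX: "x \<in> X" "\<sigma>' (pre m x) \<noteq> pre m x" using x supp_gmap[OF p(2)] sig_gmap[OF sm] by auto
  have "W a b (pre m x) = pre m x" using x xX(1) supp_gmap[OF p(1)] tt_gmap[OF a b] by auto
  moreover have "pre m x \<in> Pref m" using xX(1) unfolding Pref_def by blast
  ultimately show "x \<in> {x\<in>X. pre m x \<in> BadPre}" using W_props(2)[OF a b _ ab xX(2)] xX(1) by blast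
qed

end



context Constr
begin

lemma BadPre_sub: "BadPre \<subseteq> Pref m" unfolding BadPre_def by auto

lemma BadPre_card:
  assumes Bs: "Bad \<subseteq> Seg n m" and Bc: "\<forall>w. card {c\<in>Bad. kap c = w} < K"
  shows "card {b\<in>BadPre. ev b = w} \<le> card (Pref n) * K"
proof -
  define Sig where "Sig = (SIGMA p:S. {c\<in>Bad. kap c = (ev p, w)})"
  have fB: "finite Bad" using finite_subset[OF Bs finite_Seg] .
  have fS: "finite S" using finite_Pref by simp
  have sub: "{b\<in>BadPre. ev b = w} \<subseteq> (\<lambda>(p,c). p @ snd c) ` Sig"
  proof
    fix b assume b: "b \<in> {b\<in>BadPre. ev b = w}"
    then have bP: "b \<in> Pref m" "take n b \<in> S" "(ev (take n b), drop n b) \<in> Bad" "ev b = w"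
      unfolding BadPre_def by auto
    have "kap (ev (take n b), drop n b) = (ev (take n b), w)"
      unfolding kap_def using dec1(4)[OF nm bP(1)] bP(4) by simp
    then have "(take n b, (ev (take n b), drop n b)) \<in> Sig" unfolding Sig_def using bP by simp
    moreover have "b = (\<lambda>(p,c). p @ snd c) (take n b, (ev (take n b), drop n b))" by simp
    ultimately show "b \<in> (\<lambda>(p,c). p @ snd c) ` Sig" by blast
  qed
  have fSig: "finite Sig" unfolding Sig_def using fS fB by (intro finite_SigmaI) auto
  have "card {b\<in>BadPre. ev b = w} \<le> card ((\<lambda>(p,c). p @ snd c) ` Sig)"
    by (rule card_mono[OF finite_imageI[OF fSig] sub])
  also have "\<dots> \<le> card Sig" by (rule card_image_le[OF fSig])
  also have "\<dots> = (\<Sum>p\<in>S. card {c\<in>Bad. kap c = (ev p, w)})"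
    unfolding Sig_def using fS fB by (subst card_SigmaI) auto
  also have "\<dots> \<le> (\<Sum>p\<in>S. K)" by (rule sum_mono) (use Bc in \<open>simp add: less_imp_le\<close>)
  also have "\<dots> = card S * K" by simp
  also have "\<dots> \<le> card (Pref n) * K" using card_mono[OF finite_Pref[of n], of S] by simp
  finally show ?thesis .
qed

lemma BadPre_meas:
  assumes Bs: "Bad \<subseteq> Seg n m" and Bc: "\<forall>w. card {c\<in>Bad. kap c = w} < K"
    and big: "\<forall>x\<in>X. N * (card (Pref n) * K) \<le> card (cls m x)"
    and mu: "\<mu> \<in> inv_measures X"
  shows "real N * measure \<mu> {x\<in>X. pre m x \<in> BadPre} \<le> 1"
proof -
  have cond: "N * card {b\<in>BadPre. ev b = w} \<le> card {z\<in>Pref m. ev z = w}" for w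
  proof (cases "{b\<in>BadPre. ev b = w} = {}")
    case True then show ?thesis unfolding True by simp
  next
    case False
    then obtain b where b: "b \<in> BadPre" "ev b = w" by auto
    then obtain x where x: "x \<in> X" "b = pre m x" using BadPre_sub unfolding Pref_def by auto
    have "N * card {b\<in>BadPre. ev b = w} \<le> N * (card (Pref n) * K)"
      using BadPre_card[OF Bs Bc, of w] by simp
    also have "\<dots> \<le> card (cls m x)" using big x(1) by blast
    also have "cls m x = {z\<in>Pref m. ev z = w}" unfolding cls_def using b(2) x(2) by simp
    finally show ?thesis .
  qed
  obtain G where G: "\<forall>k<N. (\<forall>z\<in>Pref m. G k z \<in> Pref m \<and> ev (G k z) = ev z \<and> G k (G k z) = z) \<and>
            (\<forall>k'<N. k \<noteq> k' \<longrightarrow> G k ` BadPre \<inter> G k' ` BadPre = {})"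
    using disj_classes[OF finite_Pref BadPre_sub cond] by blast
  have pp: "\<forall>k<N. pperm m (G k) (G k)" unfolding pperm_def pmap_def using G by blast
  have dj: "\<forall>k<N. \<forall>k'<N. k \<noteq> k' \<longrightarrow> G k ` BadPre \<inter> G k' ` BadPre = {}" using G by blast
  show ?thesis by (rule meas_bound[OF mu BadPre_sub pp dj])
qed

end

theorem mainTheorem8:
  fixes V :: "nat \<Rightarrow> 'v set" and E :: "nat \<Rightarrow> 'e set"
    and src rng :: "'e \<Rightarrow> 'v" and v0 :: 'v
    and s :: "(nat \<Rightarrow> 'e) \<Rightarrow> (nat \<Rightarrow> 'e)" and r :: nat and \<epsilon> :: real
  defines "X \<equiv> path_space E src rng v0"
  assumes "bratteli V E src rng v0"
    and "is_cantor_space (cyl_top X)"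
    and "minimal_action X"
    and "s \<in> full_group X"
    and "\<epsilon> > 0"
  shows "\<exists>t :: nat \<Rightarrow> ((nat \<Rightarrow> 'e) \<Rightarrow> (nat \<Rightarrow> 'e)).
           (\<forall>i < 2 ^ r. t i \<in> full_group X \<and> conj_in X (t i) s) \<and>
           (\<forall>i < 2 ^ r. supp X (t i) = supp X s) \<and>
           (\<forall>i < 2 ^ r. \<forall>j < 2 ^ r. i \<noteq> j \<longrightarrow>
               (\<forall>\<mu> \<in> inv_measures X.
                   measure \<mu> (supp X s - supp X (t i \<circ> inv (t j))) < \<epsilon>)) \<and>
           (\<forall>i < 2 ^ r. \<forall>j < 2 ^ r. i \<noteq> j \<longrightarrow> even_cycles X (t i \<circ> inv (t j)))"
proof -
  interpret B: BD V E src rng v0 by unfold_locales (rule assms(2))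
  have inf: "infinite B.X" using B.X_infinite assms(3) unfolding X_def by simp
  obtain n where sn: "s \<in> full_group_n B.X n" using assms(5) unfolding full_group_def X_def by blast
  define N where "N = nat \<lceil>1 / \<epsilon>\<rceil> + 1"
  have N0: "N > 0" unfolding N_def by simp
  have Ne: "real N > 1 / \<epsilon>" unfolding N_def by linarith
  define K where "K = (2::nat)^(2*r)"
  obtain m0 where m0: "\<forall>m\<ge>m0. \<forall>x\<in>B.X. N * (card (B.Pref n) * K) \<le> card (B.cls m x)"
    using B.cls_uniform[OF _ inf] assms(4) unfolding X_def by blast
  define m where "m = max (Suc n) m0"
  have nm: "n < m" and mm0: "m \<ge> m0" unfolding m_def by auto
  obtain act Bad where AB:
    "(\<forall>d<K. \<forall>c\<in>B.Seg n m. act d c \<in> B.Seg n m \<and> B.kap (act d c) = B.kap c) \<and> (\<forall>c\<in>B.Seg n m. act 0 c = c) \<and>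
     (\<forall>d<K. \<forall>d'<K. \<forall>c\<in>B.Seg n m. act d (act d' c) = act (d XOR d') c) \<and>
     (\<forall>c\<in>B.Seg n m-Bad. \<forall>d<K. act d c = c \<longrightarrow> d = 0) \<and> Bad \<subseteq> B.Seg n m \<and> (\<forall>w. card {c\<in>Bad. B.kap c = w} < K)"
    using act_classes[where \<kappa> = B.kap, OF B.finite_Seg[of n m] K_def] by (elim exE) (erule that)
  have injS: "inj_on (B.sig n s) {p\<in>B.Pref n. B.sig n s p \<noteq> p}"
    using B.sig_bij[OF sn] unfolding bij_betw_def by (rule inj_on_subset[OF conjunct1]) auto
  obtain col :: "'e list \<Rightarrow> nat" where col:
    "\<forall>p\<in>{p\<in>B.Pref n. B.sig n s p \<noteq> p}. col p < 3 \<and>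
       (B.sig n s p \<in> {p\<in>B.Pref n. B.sig n s p \<noteq> p} \<and> B.sig n s p \<noteq> p \<longrightarrow> col (B.sig n s p) \<noteq> col p)"
  proof -
    have fS: "finite {p\<in>B.Pref n. B.sig n s p \<noteq> p}" using B.finite_Pref[of n] by simp
    show ?thesis using col3[OF fS injS] by (elim exE) (erule that)
  qed
  interpret C: Constr V E src rng v0 n m s r act Bad col
  proof unfold_locales
    show "s \<in> full_group_n B.X n" by (rule sn)
    show "n < m" by (rule nm)
    show "\<forall>d<2 ^ (2 * r). \<forall>c\<in>B.Seg n m. act d c \<in> B.Seg n m \<and> B.kap (act d c) = B.kap c"
      using AB K_def by (elim conjE) simp
    show "\<forall>c\<in>B.Seg n m. act 0 c = c" using AB by (elim conjE)
    show "\<forall>d<2 ^ (2 * r). \<forall>d'<2 ^ (2 * r). \<forall>c\<in>B.Seg n m. act d (act d' c) = act (d XOR d') c"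
      using AB K_def by (elim conjE) simp
    show "\<forall>c\<in>B.Seg n m - Bad. \<forall>d<2 ^ (2 * r). act d c = c \<longrightarrow> d = 0"
      using AB K_def by (elim conjE) simp
    show "\<forall>p\<in>{p \<in> B.Pref n. B.sig n s p \<noteq> p}. col p < 3 \<and>
       (B.sig n s p \<in> {p \<in> B.Pref n. B.sig n s p \<noteq> p} \<and> B.sig n s p \<noteq> p \<longrightarrow> col (B.sig n s p) \<noteq> col p)"
      by (rule col)
  qed
  have big: "\<forall>x\<in>B.X. N * (card (B.Pref n) * K) \<le> card (B.cls m x)" using m0 mm0 by blast
  have P1: "\<forall>i < (2::nat) ^ r. C.t i \<in> full_group B.X \<and> conj_in B.X (C.t i) s"
    using C.t_full C.t_conj by simp
  have P2: "\<forall>i < (2::nat) ^ r. supp B.X (C.t i) = supp B.X s" using C.t_supp by simp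
  have P4: "\<forall>i < (2::nat) ^ r. \<forall>j < (2::nat) ^ r. i \<noteq> j \<longrightarrow> even_cycles B.X (C.t i \<circ> inv (C.t j))"
    using C.tt_even by simp
  have P3: "\<forall>i < (2::nat) ^ r. \<forall>j < (2::nat) ^ r. i \<noteq> j \<longrightarrow>
               (\<forall>\<mu> \<in> inv_measures B.X. measure \<mu> (supp B.X s - supp B.X (C.t i \<circ> inv (C.t j))) < \<epsilon>)"
  proof (intro allI impI ballI)
    fix i j :: nat and \<mu> assume ij: "i < 2^r" "j < 2^r" "i \<noteq> j" and mu: "\<mu> \<in> inv_measures B.X"
    have ps: "prob_space \<mu>" using mu unfolding inv_measures_def by auto
    have "measure \<mu> (supp B.X s - supp B.X (C.t i \<circ> inv (C.t j))) \<le> measure \<mu> {x\<in>B.X. pre m x \<in> C.BadPre}"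
      by (rule finite_measure.finite_measure_mono[OF prob_space.finite_measure[OF ps]])
         (use C.tt_diff[OF ij] B.cyl_sets mu in auto)
    moreover have "real N * measure \<mu> {x\<in>B.X. pre m x \<in> C.BadPre} \<le> 1"
      by (rule C.BadPre_meas) (use AB big mu K_def in auto)
    moreover have "measure \<mu> {x\<in>B.X. pre m x \<in> C.BadPre} \<ge> 0" by simp
    ultimately show "measure \<mu> (supp B.X s - supp B.X (C.t i \<circ> inv (C.t j))) < \<epsilon>"
      using Ne N0 assms(6) by (smt (verit, ccfv_threshold) divide_less_eq mult.commute mult_less_cancel_right2 mult_le_cancel_left2)
  qed
  show ?thesis unfolding X_def using P1 P2 P3 P4 by (intro exI[of _ C.t]) simp
qed


end
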